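(* Let $\{(X_j,\mathcal R_j,\mu_j):j\in\Lambda\}$ be a family of probability measure spaces indexed by a set $\Lambda$, such that each covering ring $\mathcal R_j$ is complete relative to $\mu_j$ (i.e. $\mathcal R_j=\mathcal R_{\mu_j}$) and each $(X_j,\tau_{\mathcal R_j})$ is Hausdorff. Let $X:=\prod_{j\in\Lambda}X_j$ with the product (Tychonoff) topology, each $X_j$ carrying the topology $\tau_{\mathcal R_j}$, let $\pi_j:X\to X_j$ be the projections, and let $\mathcal R$ be the ring $\bigcup_{j_1,\dots,j_n\in\Lambda,\,n\in\mathbf N}\bigcap_{l=1}^n\pi_{j_l}^{-1}(\mathcal R_{j_l})$ of cylinder sets. Let $\mu:\mathcal R\to\mathbf K$ be a cylindrical distribution, i.e. $\mu\big(\bigcap_{l=1}^n\pi_{j_l}^{-1}(A_l)\big)=\prod_{l=1}^n\mu_{j_l}(A_l)$ for all pairwise distinct $j_1,\dots,j_n\in\Lambda$, $n\in\mathbf N$, and $A_l\in\mathcal R_{j_l}$. Then $\mu$ has an extension to a probability measure $\mu$ on $(X,\mathcal R_\mu)$, where $\mathcal R_\mu$ is the completion of $\mathcal R$ relative to $\mu$.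
   Context: $\mathbf K$ is a field with a nontrivial non-Archimedean valuation $|\cdot|$, $\mathbf K\supset\mathbf Q_p$, complete as an ultrametric space. A covering ring of a set $X$ is a family of subsets closed under finite unions, intersections and differences whose union is $X$; it defines the topology $\tau_{\mathcal R}$ on $X$ with base $\mathcal R$. A subfamily $\mathcal S\subset\mathcal R$ is shrinking if for all $A,B\in\mathcal S$ there is $C\in\mathcal S$ with $C\subset A\cap B$. A measure $\mu:\mathcal R\to\mathbf K$ is finitely additive on disjoint sets, has $\|A\|_\mu:=\sup\{|\mu(B)|:B\in\mathcal R,B\subset A\}<\infty$ for all $A\in\mathcal R$, and satisfies: for every shrinking $\mathcal S\subset\mathcal R$ with empty intersection and every $\epsilon>0$ there is $B\in\mathcal S$ with $|\mu(A)|\le\epsilon$ for all $A\in\mathcal S$, $A\subset B$. A probability measure satisfies $\mu(X)=1$ and $\|\mu\|:=\|X\|_\mu=1$. Put $N_\mu(x):=\inf_{x\in U\in\mathcal R}\|U\|_\mu$. A function $f:X\to\mathbf K$ is $\mu$-integrable if there are $\mathcal R$-step functions $f_n$ (finite $\mathbf K$-linear combinations of characteristic functions of elements of $\mathcal R$) with $\sup_{x\in X}|f(x)-f_n(x)|N_\mu(x)\to0$; the completion $\mathcal R_\mu\supset\mathcal R$ is the ring of subsets $A\subset X$ whose characteristic functions are $\mu$-integrable, and $\mu$ extends to it. *)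

theory Defs
  imports "HOL-Analysis.Analysis" "HOL-Computational_Algebra.Primes"
begin

text \<open>The predicate below says: av is a nontrivial non-Archimedean absolute value, K is complete
 for it, and K contains Q_p, i.e. av restricted to the integers is the p-adic absolute value
 (this determines av on Q, and by completeness the closure of Q in K is Q_p).\<close>

definition nonarch_field_over_Qp :: "nat \<Rightarrow> ('k::field \<Rightarrow> real) \<Rightarrow> bool" where
  "nonarch_field_over_Qp p av \<longleftrightarrow>
     prime p \<and>
     (\<forall>x. 0 \<le> av x) \<and> (\<forall>x. av x = 0 \<longleftrightarrow> x = 0) \<and>
     (\<forall>x y. av (x * y) = av x * av y) \<and>
     (\<forall>x y. av (x + y) \<le> max (av x) (av y)) \<and>
     (\<exists>x. av x \<noteq> 0 \<and> av x \<noteq> 1) \<and>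
     (\<forall>s::nat \<Rightarrow> 'k.
        (\<forall>e>0. \<exists>N. \<forall>m\<ge>N. \<forall>n\<ge>N. av (s m - s n) < e) \<longrightarrow>
        (\<exists>L. \<forall>e>0. \<exists>N. \<forall>n\<ge>N. av (s n - L) < e)) \<and>
     (\<forall>n::int. n \<noteq> 0 \<longrightarrow> av (of_int n) = inverse (real p ^ multiplicity (int p) n))"

definition ring_closed :: "'a set set \<Rightarrow> bool" where
  "ring_closed R \<longleftrightarrow> (\<forall>A\<in>R. \<forall>B\<in>R. A \<union> B \<in> R \<and> A \<inter> B \<in> R \<and> A - B \<in> R)"

definition covering_ring :: "'a set \<Rightarrow> 'a set set \<Rightarrow> bool" where
  "covering_ring X R \<longleftrightarrow> R \<subseteq> Pow X \<and> ring_closed R \<and> \<Union>R = X"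

definition ring_topology :: "'a set set \<Rightarrow> 'a topology" where
  "ring_topology R = topology_generated_by R"

definition shrinking :: "'a set set \<Rightarrow> bool" where
  "shrinking S \<longleftrightarrow> (\<forall>A\<in>S. \<forall>B\<in>S. \<exists>C\<in>S. C \<subseteq> A \<inter> B)"

definition set_norm :: "('k \<Rightarrow> real) \<Rightarrow> 'a set set \<Rightarrow> ('a set \<Rightarrow> 'k) \<Rightarrow> 'a set \<Rightarrow> real" where
  "set_norm av R mu A = Sup {av (mu B) | B. B \<in> R \<and> B \<subseteq> A}"

definition is_measure :: "('k::field \<Rightarrow> real) \<Rightarrow> 'a set \<Rightarrow> 'a set set \<Rightarrow> ('a set \<Rightarrow> 'k) \<Rightarrow> bool" where
  "is_measure av X R mu \<longleftrightarrow>
     covering_ring X R \<and>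
     (\<forall>A\<in>R. \<forall>B\<in>R. A \<inter> B = {} \<longrightarrow> mu (A \<union> B) = mu A + mu B) \<and>
     (\<forall>A\<in>R. bdd_above {av (mu B) | B. B \<in> R \<and> B \<subseteq> A}) \<and>
     (\<forall>S. S \<subseteq> R \<and> shrinking S \<and> \<Inter>S = {} \<longrightarrow>
        (\<forall>e>0. \<exists>B\<in>S. \<forall>A\<in>S. A \<subseteq> B \<longrightarrow> av (mu A) \<le> e))"

definition is_prob_measure :: "('k::field \<Rightarrow> real) \<Rightarrow> 'a set \<Rightarrow> 'a set set \<Rightarrow> ('a set \<Rightarrow> 'k) \<Rightarrow> bool" where
  "is_prob_measure av X R mu \<longleftrightarrow>
     is_measure av X R mu \<and> X \<in> R \<and> mu X = 1 \<and> set_norm av R mu X = 1"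

definition Nmu :: "('k \<Rightarrow> real) \<Rightarrow> 'a set set \<Rightarrow> ('a set \<Rightarrow> 'k) \<Rightarrow> 'a \<Rightarrow> real" where
  "Nmu av R mu x = Inf {set_norm av R mu U | U. U \<in> R \<and> x \<in> U}"

definition step_function :: "'a set set \<Rightarrow> ('a \<Rightarrow> 'k::field) \<Rightarrow> bool" where
  "step_function R f \<longleftrightarrow>
     (\<exists>(n::nat) (c::nat \<Rightarrow> 'k) (A::nat \<Rightarrow> 'a set). (\<forall>i<n. A i \<in> R) \<and>
        f = (\<lambda>x. \<Sum>i<n. c i * of_bool (x \<in> A i)))"

definition mu_integrable :: "('k::field \<Rightarrow> real) \<Rightarrow> 'a set \<Rightarrow> 'a set set \<Rightarrow> ('a set \<Rightarrow> 'k) \<Rightarrow> ('a \<Rightarrow> 'k) \<Rightarrow> bool" where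
  "mu_integrable av X R mu f \<longleftrightarrow>
     (\<exists>fs::nat \<Rightarrow> 'a \<Rightarrow> 'k. (\<forall>n. step_function R (fs n)) \<and>
        (\<forall>e>0. \<exists>N. \<forall>n\<ge>N. \<forall>x\<in>X. av (f x - fs n x) * Nmu av R mu x \<le> e))"

definition completion :: "('k::field \<Rightarrow> real) \<Rightarrow> 'a set \<Rightarrow> 'a set set \<Rightarrow> ('a set \<Rightarrow> 'k) \<Rightarrow> 'a set set" where
  "completion av X R mu = {A. A \<subseteq> X \<and> mu_integrable av X R mu (\<lambda>x. of_bool (x \<in> A))}"

definition cylinders :: "'i set \<Rightarrow> ('i \<Rightarrow> 'a set) \<Rightarrow> ('i \<Rightarrow> 'a set set) \<Rightarrow> ('i \<Rightarrow> 'a) set set" where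
  "cylinders L Xs Rs =
     {PiE L Xs \<inter> (\<Inter>j\<in>J. {x. x j \<in> A j}) | J A. finite J \<and> J \<subseteq> L \<and> (\<forall>j\<in>J. A j \<in> Rs j)}"

definition ring_generated :: "'a set set \<Rightarrow> 'a set set" where
  "ring_generated C = \<Inter>{R. C \<subseteq> R \<and> ring_closed R}"

definition cylinder_ring :: "'i set \<Rightarrow> ('i \<Rightarrow> 'a set) \<Rightarrow> ('i \<Rightarrow> 'a set set) \<Rightarrow> ('i \<Rightarrow> 'a) set set" where
  "cylinder_ring L Xs Rs = ring_generated (cylinders L Xs Rs)"

end

theory Submission
  imports Defs
begin


locale nav =
  fixes av :: "'k::field \<Rightarrow> real"
  assumes nonneg: "\<And>x. 0 \<le> av x"
    and zero_iff: "\<And>x. av x = 0 \<longleftrightarrow> x = 0"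
    and mult: "\<And>x y. av (x * y) = av x * av y"
    and ultra: "\<And>x y. av (x + y) \<le> max (av x) (av y)"
    and cauchy: "\<And>s::nat \<Rightarrow> 'k. (\<forall>e>0. \<exists>N. \<forall>m\<ge>N. \<forall>n\<ge>N. av (s m - s n) < e) \<Longrightarrow>
        (\<exists>L. \<forall>e>0. \<exists>N. \<forall>n\<ge>N. av (s n - L) < e)"
begin

lemma av0[simp]: "av 0 = 0" using zero_iff by simp

lemma av1[simp]: "av 1 = 1"
proof -
  have "av 1 = av 1 * av 1" using mult[of 1 1] by simp
  moreover have "av 1 \<noteq> 0" using zero_iff by simp
  ultimately show ?thesis by (metis mult_cancel_left1)
qed

lemma av_minus[simp]: "av (- x) = av x"
proof -
  have "av (-1) * av (-1) = 1" using mult[of "-1" "-1"] by simp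
  hence "(av (-1) - 1) * (av (-1) + 1) = 0" by (simp add: algebra_simps)
  moreover have "av (-1) + 1 > 0" using nonneg[of "-1"] by simp
  ultimately have "av (-1) = 1" by simp
  thus ?thesis using mult[of "-1" x] by simp
qed

lemma av_diff_commute: "av (x - y) = av (y - x)"
  by (metis av_minus minus_diff_eq)

lemma av_diff: "av (x - y) \<le> max (av x) (av y)"
  using ultra[of x "-y"] by simp

lemma av_tri: "av (a - c) \<le> max (av (a - b)) (av (b - c))"
  using ultra[of "a - b" "b - c"] by simp

lemma av_le0: "av x \<le> 0 \<Longrightarrow> x = 0"
  using nonneg[of x] zero_iff by (metis order_antisym)

lemma av_eps: "(\<And>d. d > 0 \<Longrightarrow> av x \<le> d) \<Longrightarrow> x = 0"
  by (metis av_le0 field_le_epsilon add_0)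

lemma av_sum_le: "finite I \<Longrightarrow> 0 \<le> b \<Longrightarrow> (\<And>i. i \<in> I \<Longrightarrow> av (f i) \<le> b) \<Longrightarrow> av (sum f I) \<le> b"
proof (induction I rule: finite_induct)
  case empty thus ?case by simp
next
  case (insert a F)
  have "av (f a) \<le> b" "av (sum f F) \<le> b" using insert by auto
  thus ?case using ultra[of "f a" "sum f F"] insert(1,2) by simp
qed

lemma av_prod: "finite I \<Longrightarrow> av (prod f I) = (\<Prod>i\<in>I. av (f i))"
  by (induction I rule: finite_induct) (auto simp: mult)

lemma av_prod_le1: "finite I \<Longrightarrow> (\<And>i. i \<in> I \<Longrightarrow> av (f i) \<le> 1) \<Longrightarrow> av (prod f I) \<le> 1"
  by (simp add: av_prod prod_le_1 nonneg)

end

section \<open>Ultrafilters as maximal FIP families\<close>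

definition fip :: "'a set \<Rightarrow> 'a set set \<Rightarrow> bool" where
  "fip X U \<longleftrightarrow> (\<forall>G. finite G \<and> G \<subseteq> U \<longrightarrow> X \<inter> \<Inter>G \<noteq> {})"

definition ultra_on :: "'a set \<Rightarrow> 'a set set \<Rightarrow> bool" where
  "ultra_on X U \<longleftrightarrow> fip X U \<and> (\<forall>E. E \<subseteq> X \<longrightarrow> E \<in> U \<or> X - E \<in> U)"

lemma fip_mono: "fip X U \<Longrightarrow> V \<subseteq> U \<Longrightarrow> fip X V"
  unfolding fip_def by blast

lemma ultra_exists:
  assumes "fip X B"
  shows "\<exists>U. ultra_on X U \<and> B \<subseteq> U"
proof -
  let ?A = "{U. fip X U \<and> B \<subseteq> U}"
  have "\<exists>M\<in>?A. \<forall>Z\<in>?A. M \<subseteq> Z \<longrightarrow> Z = M"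
  proof (rule Zorn_Lemma2, intro ballI)
    fix C assume C: "C \<in> chains ?A"
    have ch: "chain\<^sub>\<subseteq> C" and CA: "C \<subseteq> ?A" using C by (simp_all add: chains_def)
    show "\<exists>U\<in>?A. \<forall>Z\<in>C. Z \<subseteq> U"
    proof (cases "C = {}")
      case True show ?thesis by (rule bexI[of _ B]) (use True assms in auto)
    next
      case False
      have fin: "\<exists>Z\<in>C. G \<subseteq> Z" if "finite G" "G \<subseteq> \<Union>C" for G
        using that
      proof (induction G rule: finite_induct)
        case empty thus ?case using False by blast
      next
        case (insert g G)
        from insert.prems have "G \<subseteq> \<Union>C" by simp
        then obtain Z where Z: "Z \<in> C" "G \<subseteq> Z" using insert.IH by blast
        from insert.prems obtain Z' where Z': "Z' \<in> C" "g \<in> Z'" by blast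
        from ch Z(1) Z'(1) have "Z \<subseteq> Z' \<or> Z' \<subseteq> Z" unfolding chain_subset_def by blast
        thus ?case
        proof
          assume "Z \<subseteq> Z'" thus ?case using Z Z' by (intro bexI[of _ Z']) auto
        next
          assume "Z' \<subseteq> Z" thus ?case using Z Z' by (intro bexI[of _ Z]) auto
        qed
      qed
      have "fip X (\<Union>C)" unfolding fip_def
      proof (intro allI impI)
        fix G assume G: "finite G \<and> G \<subseteq> \<Union>C"
        then obtain Z where Z: "Z \<in> C" "G \<subseteq> Z" using fin by blast
        have "fip X Z" using CA Z(1) by blast
        thus "X \<inter> \<Inter>G \<noteq> {}" using G Z(2) unfolding fip_def by blast
      qed
      moreover have "B \<subseteq> \<Union>C"
      proof -
        obtain Z where Z: "Z \<in> C" using False by blast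
        hence "B \<subseteq> Z" using CA by blast
        thus ?thesis using Z by blast
      qed
      ultimately show ?thesis by (intro bexI[of _ "\<Union>C"]) auto
    qed
  qed
  then obtain M where M0: "M \<in> ?A" and max0: "\<forall>Z\<in>?A. M \<subseteq> Z \<longrightarrow> Z = M"
    by (rule bexE)
  have M: "fip X M" "B \<subseteq> M" using M0 by simp_all
  have max: "Z = M" if "fip X Z" "B \<subseteq> Z" "M \<subseteq> Z" for Z
    using max0 that by simp
  have dich: "E \<in> M \<or> X - E \<in> M" if "E \<subseteq> X" for E
  proof (rule ccontr)
    assume nn: "\<not> (E \<in> M \<or> X - E \<in> M)"
    have n1: "\<not> fip X (insert E M)"
    proof
      assume "fip X (insert E M)"
      from max[OF this] M(2) have "insert E M = M" by blast
      thus False using nn by blast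
    qed
    then obtain G where G: "finite G" "G \<subseteq> insert E M" "X \<inter> \<Inter>G = {}" unfolding fip_def by blast
    have n2: "\<not> fip X (insert (X - E) M)"
    proof
      assume "fip X (insert (X - E) M)"
      from max[OF this] M(2) have "insert (X - E) M = M" by blast
      thus False using nn by blast
    qed
    then obtain G' where G': "finite G'" "G' \<subseteq> insert (X - E) M" "X \<inter> \<Inter>G' = {}" unfolding fip_def by blast
    define H where "H = (G - {E}) \<union> (G' - {X - E})"
    have "finite H" using G(1) G'(1) unfolding H_def by simp
    moreover have "H \<subseteq> M" using G(2) G'(2) unfolding H_def by blast
    ultimately have ne: "X \<inter> \<Inter>H \<noteq> {}" using M(1) unfolding fip_def by blast
    then obtain x where x: "x \<in> X" "x \<in> \<Inter>H" by blast
    show False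
    proof (cases "x \<in> E")
      case True
      have "x \<in> \<Inter>G"
      proof
        fix g assume "g \<in> G"
        thus "x \<in> g" using True x unfolding H_def by (cases "g = E") auto
      qed
      thus False using G(3) x(1) by blast
    next
      case False
      have "x \<in> \<Inter>G'"
      proof
        fix g assume "g \<in> G'"
        thus "x \<in> g" using False x unfolding H_def by (cases "g = X - E") auto
      qed
      thus False using G'(3) x(1) by blast
    qed
  qed
  have "ultra_on X M" unfolding ultra_on_def using M(1) dich by blast
  thus ?thesis using M(2) by blast
qed

lemma ultra_fip2: "ultra_on X U \<Longrightarrow> A \<in> U \<Longrightarrow> B \<in> U \<Longrightarrow> X \<inter> A \<inter> B \<noteq> {}"
  unfolding ultra_on_def fip_def by (drule conjunct1, drule spec[of _ "{A,B}"]) auto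

lemma ultra_fip1: "ultra_on X U \<Longrightarrow> A \<in> U \<Longrightarrow> X \<inter> A \<noteq> {}"
  using ultra_fip2[of X U A A] by auto

lemma ultra_fip3: "ultra_on X U \<Longrightarrow> A \<in> U \<Longrightarrow> B \<in> U \<Longrightarrow> C \<in> U \<Longrightarrow> X \<inter> A \<inter> B \<inter> C \<noteq> {}"
  unfolding ultra_on_def fip_def by (drule conjunct1, drule spec[of _ "{A,B,C}"]) auto

lemma ultra_X: "ultra_on X U \<Longrightarrow> X \<in> U"
proof -
  assume u: "ultra_on X U"
  have "X \<inter> \<Inter>{} \<noteq> {}" using u unfolding ultra_on_def fip_def by blast
  hence "X - X \<notin> U" using ultra_fip1[OF u, of "X - X"] by auto
  thus ?thesis using u unfolding ultra_on_def by blast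
qed

lemma ultra_Int: "ultra_on X U \<Longrightarrow> A \<in> U \<Longrightarrow> B \<in> U \<Longrightarrow> A \<subseteq> X \<Longrightarrow> A \<inter> B \<in> U"
proof (rule ccontr)
  assume u: "ultra_on X U" "A \<in> U" "B \<in> U" "A \<subseteq> X" "A \<inter> B \<notin> U"
  have "A \<inter> B \<subseteq> X" using u(4) by auto
  hence "X - (A \<inter> B) \<in> U" using u(1,5) unfolding ultra_on_def by blast
  from ultra_fip3[OF u(1) u(2) u(3) this] show False by auto
qed

lemma ultra_up: "ultra_on X U \<Longrightarrow> A \<in> U \<Longrightarrow> A \<subseteq> B \<Longrightarrow> B \<subseteq> X \<Longrightarrow> B \<in> U"
proof (rule ccontr)
  assume u: "ultra_on X U" "A \<in> U" "A \<subseteq> B" "B \<subseteq> X" "B \<notin> U"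
  hence "X - B \<in> U" unfolding ultra_on_def by auto
  from ultra_fip2[OF u(1) u(2) this] u(3) show False by auto
qed




locale pm = nav av for av :: "'k::field \<Rightarrow> real" +
  fixes X :: "'a set" and R :: "'a set set" and mu :: "'a set \<Rightarrow> 'k"
  assumes pm: "is_prob_measure av X R mu"
begin

lemma pm_parts: "covering_ring X R" "\<forall>A\<in>R. \<forall>B\<in>R. A \<inter> B = {} \<longrightarrow> mu (A \<union> B) = mu A + mu B"
   "\<forall>A\<in>R. bdd_above {av (mu B) | B. B \<in> R \<and> B \<subseteq> A}"
   "\<forall>S. S \<subseteq> R \<and> shrinking S \<and> \<Inter>S = {} \<longrightarrow>
        (\<forall>e>0. \<exists>B\<in>S. \<forall>A\<in>S. A \<subseteq> B \<longrightarrow> av (mu A) \<le> e)"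
   "X \<in> R" "mu X = 1" "set_norm av R mu X = 1"
  using pm unfolding is_prob_measure_def is_measure_def by simp_all

lemma subR: "A \<in> R \<Longrightarrow> A \<subseteq> X"
  using pm_parts(1) unfolding covering_ring_def by blast

lemma rUn: "A \<in> R \<Longrightarrow> B \<in> R \<Longrightarrow> A \<union> B \<in> R"
  and rInt: "A \<in> R \<Longrightarrow> B \<in> R \<Longrightarrow> A \<inter> B \<in> R"
  and rDiff: "A \<in> R \<Longrightarrow> B \<in> R \<Longrightarrow> A - B \<in> R"
  using pm_parts(1) unfolding covering_ring_def ring_closed_def by simp_all

lemma XR: "X \<in> R" and muX: "mu X = 1" and nX: "set_norm av R mu X = 1"
  using pm_parts by simp_all

lemma emp: "{} \<in> R" using rDiff[OF XR XR] by simp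

lemma add: "A \<in> R \<Longrightarrow> B \<in> R \<Longrightarrow> A \<inter> B = {} \<Longrightarrow> mu (A \<union> B) = mu A + mu B"
  using pm_parts(2) by simp

lemma bdd: "A \<in> R \<Longrightarrow> bdd_above {av (mu B) | B. B \<in> R \<and> B \<subseteq> A}"
  using pm_parts(3) by simp

lemma cont: "S \<subseteq> R \<Longrightarrow> shrinking S \<Longrightarrow> \<Inter>S = {} \<Longrightarrow> e > 0 \<Longrightarrow>
    \<exists>B\<in>S. \<forall>A\<in>S. A \<subseteq> B \<longrightarrow> av (mu A) \<le> e"
  using pm_parts(4) by simp

lemma mu_empty: "mu {} = 0"
proof -
  have "mu {} + 0 = mu {} + mu {}" using add[OF emp emp] by simp
  thus ?thesis by (metis add_left_cancel)
qed

lemma mu_split: "A \<in> R \<Longrightarrow> B \<in> R \<Longrightarrow> mu A = mu (A \<inter> B) + mu (A - B)"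
proof -
  assume ab: "A \<in> R" "B \<in> R"
  have "mu ((A \<inter> B) \<union> (A - B)) = mu (A \<inter> B) + mu (A - B)"
    by (rule add) (use rInt[OF ab] rDiff[OF ab] in auto)
  thus ?thesis by (simp add: Int_Diff_Un)
qed

abbreviation nrm where "nrm A \<equiv> set_norm av R mu A"

lemma nrm_upper: "A \<in> R \<Longrightarrow> B \<in> R \<Longrightarrow> B \<subseteq> A \<Longrightarrow> av (mu B) \<le> nrm A"
  unfolding set_norm_def using bdd[of A] by (intro cSup_upper) auto

lemma nrm_least: "A \<in> R \<Longrightarrow> (\<And>B. B \<in> R \<Longrightarrow> B \<subseteq> A \<Longrightarrow> av (mu B) \<le> t) \<Longrightarrow> nrm A \<le> t"
  unfolding set_norm_def by (rule cSup_least) blast+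

lemma nrm_nonneg: "A \<in> R \<Longrightarrow> 0 \<le> nrm A"
  using nrm_upper[of A A] nonneg[of "mu A"] by simp

lemma le1: "B \<in> R \<Longrightarrow> av (mu B) \<le> 1"
  using nrm_upper[OF XR _ subR] nX by simp

lemma nrm_empty: "nrm {} = 0"
proof -
  have "nrm {} \<le> 0" by (rule nrm_least[OF emp]) (simp add: mu_empty)
  thus ?thesis using nrm_nonneg[OF emp] by simp
qed

lemma nrm_Un: "A \<in> R \<Longrightarrow> B \<in> R \<Longrightarrow> nrm (A \<union> B) \<le> max (nrm A) (nrm B)"
proof (rule nrm_least[OF rUn])
  fix C assume AB: "A \<in> R" "B \<in> R" and C: "C \<in> R" "C \<subseteq> A \<union> B"
  have "mu C = mu (C \<inter> A) + mu (C - A)" using mu_split[OF C(1) AB(1)] .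
  moreover have "av (mu (C \<inter> A)) \<le> nrm A" using nrm_upper[OF AB(1) rInt[OF C(1) AB(1)]] by auto
  moreover have "av (mu (C - A)) \<le> nrm B" using nrm_upper[OF AB(2) rDiff[OF C(1) AB(1)]] C(2) by auto
  ultimately show "av (mu C) \<le> max (nrm A) (nrm B)"
    using ultra[of "mu (C \<inter> A)" "mu (C - A)"] by (metis (no_types, lifting) max.mono order_trans)
qed

abbreviation N where "N x \<equiv> Nmu av R mu x"

lemma N_set_ne: "x \<in> X \<Longrightarrow> {nrm U | U. U \<in> R \<and> x \<in> U} \<noteq> {}"
  using XR by blast

lemma N_set_bdd: "bdd_below {nrm U | U. U \<in> R \<and> x \<in> U}"
proof (rule bdd_belowI[of _ 0])
  fix y assume "y \<in> {nrm U | U. U \<in> R \<and> x \<in> U}"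
  then obtain U where "y = nrm U" "U \<in> R" by blast
  thus "0 \<le> y" using nrm_nonneg by simp
qed

lemma N_le: "U \<in> R \<Longrightarrow> x \<in> U \<Longrightarrow> N x \<le> nrm U"
  unfolding Nmu_def using N_set_bdd[of x] by (intro cInf_lower) auto

lemma N_nonneg: "x \<in> X \<Longrightarrow> 0 \<le> N x"
  unfolding Nmu_def
proof (rule cInf_greatest)
  assume "x \<in> X" thus "{nrm U | U. U \<in> R \<and> x \<in> U} \<noteq> {}" by (rule N_set_ne)
next
  fix y assume "y \<in> {nrm U | U. U \<in> R \<and> x \<in> U}"
  then obtain U where "y = nrm U" "U \<in> R" by blast
  thus "0 \<le> y" using nrm_nonneg by simp
qed

lemma N_less: "x \<in> X \<Longrightarrow> N x < t \<Longrightarrow> \<exists>U\<in>R. x \<in> U \<and> nrm U < t"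
proof -
  assume x: "x \<in> X" and "N x < t"
  hence "\<exists>y\<in>{nrm U | U. U \<in> R \<and> x \<in> U}. y < t"
    unfolding Nmu_def using cInf_less_iff[OF N_set_ne[OF x] N_set_bdd] by blast
  thus ?thesis by blast
qed

lemma lemma1:
  assumes B: "B \<in> R" and C: "C \<in> R" "C \<subseteq> B" and d: "0 \<le> d" and Nd: "\<And>x. x \<in> B \<Longrightarrow> N x \<le> d"
  shows "av (mu C) \<le> d"
proof (rule ccontr)
  assume "\<not> av (mu C) \<le> d"
  hence gt: "av (mu C) > d" by simp
  define e where "e = (d + av (mu C)) / 2"
  have e: "d < e" "e < av (mu C)" "0 < e" using gt d unfolding e_def by auto
  define S where "S = {C - W | W. W \<in> R \<and> nrm W < e}"
  have SR: "S \<subseteq> R" unfolding S_def using rDiff[OF C(1)] by blast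
  have sh: "shrinking S" unfolding shrinking_def
  proof (intro ballI)
    fix A1 A2 assume "A1 \<in> S" "A2 \<in> S"
    then obtain W1 W2 where W: "A1 = C - W1" "W1 \<in> R" "nrm W1 < e" "A2 = C - W2" "W2 \<in> R" "nrm W2 < e"
      unfolding S_def by blast
    have "nrm (W1 \<union> W2) < e" using nrm_Un[OF W(2) W(5)] W(3,6) by linarith
    hence "C - (W1 \<union> W2) \<in> S" unfolding S_def using rUn[OF W(2) W(5)] by blast
    thus "\<exists>C'\<in>S. C' \<subseteq> A1 \<inter> A2" using W by (intro bexI[of _ "C - (W1 \<union> W2)"]) auto
  qed
  have em: "\<Inter>S = {}"
  proof (rule ccontr)
    assume "\<Inter>S \<noteq> {}"
    then obtain x where x: "x \<in> \<Inter>S" by blast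
    have "\<exists>W. C - {} = C - W \<and> W \<in> R \<and> nrm W < e" using emp nrm_empty e(3) by (intro exI[of _ "{}"]) simp
    hence "C - {} \<in> S" unfolding S_def by (simp only: mem_Collect_eq)
    hence xC: "x \<in> C" using x by blast
    hence "x \<in> X" using subR[OF C(1)] by blast
    moreover have "N x < e" using Nd[of x] xC C(2) e(1) by force
    ultimately obtain U where U: "U \<in> R" "x \<in> U" "nrm U < e" using N_less by blast
    hence "C - U \<in> S" unfolding S_def by blast
    hence "x \<in> C - U" by (rule InterD[OF x])
    thus False using U(2) by blast
  qed
  obtain D where D: "D \<in> S" "\<And>A. A \<in> S \<Longrightarrow> A \<subseteq> D \<Longrightarrow> av (mu A) \<le> e"
    using cont[OF SR sh em e(3)] by blast
  then obtain W where W: "D = C - W" "W \<in> R" "nrm W < e" unfolding S_def by blast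
  have 1: "av (mu (C - W)) \<le> e" using D(2)[of "C - W"] D(1) W(1) by simp
  have 2: "av (mu (C \<inter> W)) \<le> e" using nrm_upper[OF W(2) rInt[OF C(1) W(2)]] W(3) by auto
  have "av (mu C) \<le> e" using mu_split[OF C(1) W(2)] ultra[of "mu (C \<inter> W)" "mu (C - W)"] 1 2 by simp
  thus False using e(2) by simp
qed

lemma mu_close:
  assumes "B \<in> R" "B' \<in> R" "0 \<le> d" "\<And>x. x \<in> X \<Longrightarrow> (x \<in> B) \<noteq> (x \<in> B') \<Longrightarrow> N x \<le> d"
  shows "av (mu B - mu B') \<le> d"
proof -
  have 1: "av (mu (B - B')) \<le> d"
  proof (rule lemma1[OF rDiff[OF assms(1,2)] rDiff[OF assms(1,2)] _ assms(3)])
    fix x assume "x \<in> B - B'"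
    thus "N x \<le> d" using assms(4)[of x] subR[OF assms(1)] by blast
  qed simp
  have 2: "av (mu (B' - B)) \<le> d"
  proof (rule lemma1[OF rDiff[OF assms(2,1)] rDiff[OF assms(2,1)] _ assms(3)])
    fix x assume "x \<in> B' - B"
    thus "N x \<le> d" using assms(4)[of x] subR[OF assms(2)] by blast
  qed simp
  have "mu B - mu B' = mu (B - B') - mu (B' - B)"
    using mu_split[OF assms(1,2)] mu_split[OF assms(2,1)] by (simp add: Int_commute)
  thus ?thesis using av_diff[of "mu (B - B')" "mu (B' - B)"] 1 2 by simp
qed

end



lemma shrinking_fin:
  assumes "shrinking S" "finite G" "G \<subseteq> S" "G \<noteq> {}"
  shows "\<exists>C\<in>S. C \<subseteq> \<Inter>G"
  using assms(2,4,3)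
proof (induction G rule: finite_ne_induct)
  case (singleton x) thus ?case by blast
next
  case (insert x F)
  then obtain C where C: "C \<in> S" "C \<subseteq> \<Inter>F" by blast
  have "x \<in> S" using insert.prems by blast
  then obtain C' where "C' \<in> S" "C' \<subseteq> x \<inter> C" using assms(1) C(1) unfolding shrinking_def by blast
  thus ?case using C(2) by (intro bexI[of _ C']) auto
qed

context pm
begin

definition approx :: "'a set \<Rightarrow> real \<Rightarrow> 'a set \<Rightarrow> bool" where
  "approx A d B \<longleftrightarrow> B \<in> R \<and> (\<forall>x\<in>X. (x \<in> A) \<noteq> (x \<in> B) \<longrightarrow> N x \<le> d)"

lemma level:
  fixes s :: "'a \<Rightarrow> 'k"
  assumes "step_function R s" shows "{x\<in>X. P (s x)} \<in> R"
proof -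
  obtain n and c :: "nat \<Rightarrow> 'k" and A where A: "\<forall>i<n. A i \<in> R" and s: "s = (\<lambda>x. \<Sum>i<n. c i * of_bool (x \<in> A i))"
    using assms unfolding step_function_def by blast
  have "\<forall>P. {x\<in>X. P (\<Sum>i<m. c i * of_bool (x \<in> A i))} \<in> R" if "m \<le> n" for m
    using that
  proof (induction m)
    case 0
    show ?case
    proof
      fix P :: "'k \<Rightarrow> bool"
      show "{x\<in>X. P (\<Sum>i<0. c i * of_bool (x \<in> A i))} \<in> R"
        by (cases "P 0") (simp_all add: XR emp)
    qed
  next
    case (Suc m)
    have Am: "A m \<in> R" using A Suc.prems by simp
    show ?case
    proof
      fix P :: "'k \<Rightarrow> bool"
      let ?s = "\<lambda>x. \<Sum>i<m. c i * of_bool (x \<in> A i)"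
      have eq: "{x\<in>X. P (\<Sum>i<Suc m. c i * of_bool (x \<in> A i))} =
          (A m \<inter> {x\<in>X. P (?s x + c m)}) \<union> ({x\<in>X. P (?s x)} - A m)"
        using subR[OF Am] by auto
      have IH: "\<forall>P. {x\<in>X. P (?s x)} \<in> R" using Suc.IH[OF Suc_leD[OF Suc.prems]] .
      have 1: "{x\<in>X. P (?s x + c m)} \<in> R" using spec[OF IH, of "\<lambda>v. P (v + c m)"] by simp
      have 2: "{x\<in>X. P (?s x)} \<in> R" using spec[OF IH, of P] by simp
      show "{x\<in>X. P (\<Sum>i<Suc m. c i * of_bool (x \<in> A i))} \<in> R"
        unfolding eq by (intro rUn rInt rDiff Am 1 2)
    qed
  qed
  thus ?thesis unfolding s by simp
qed

lemma compl_iff: "A \<in> completion av X R mu \<longleftrightarrow> A \<subseteq> X \<and> (\<forall>d>0. \<exists>B. approx A d B)"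
proof
  assume "A \<in> completion av X R mu"
  hence AX: "A \<subseteq> X" and int: "mu_integrable av X R mu (\<lambda>x. of_bool (x \<in> A))"
    unfolding completion_def by auto
  obtain fs :: "nat \<Rightarrow> 'a \<Rightarrow> 'k" where st: "\<And>n. step_function R (fs n)" and
    conv: "\<And>e. e > 0 \<Longrightarrow> \<exists>M. \<forall>n\<ge>M. \<forall>x\<in>X. av (of_bool (x \<in> A) - fs n x) * N x \<le> e"
    using int unfolding mu_integrable_def by blast
  have "\<exists>B. approx A d B" if d: "d > 0" for d
  proof -
    obtain M where M: "\<And>x. x \<in> X \<Longrightarrow> av (of_bool (x \<in> A) - fs M x) * N x \<le> d"
      using conv[OF d] by blast
    define B where "B = {x\<in>X. av (fs M x - 1) < 1}"
    have BR: "B \<in> R" unfolding B_def by (rule level[OF st])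
    have "N x \<le> d" if x: "x \<in> X" "(x \<in> A) \<noteq> (x \<in> B)" for x
    proof -
      have h: "av (of_bool (x \<in> A) - fs M x) * N x \<le> d" using M x(1) by blast
      have Nn: "0 \<le> N x" using N_nonneg x(1) by blast
      have "1 \<le> av (of_bool (x \<in> A) - fs M x)"
      proof (cases "x \<in> A")
        case True
        hence "\<not> av (fs M x - 1) < 1" using x unfolding B_def by auto
        thus ?thesis using True av_diff_commute[of 1 "fs M x"] by simp
      next
        case False
        hence lt: "av (fs M x - 1) < 1" using x unfolding B_def by auto
        have "av 1 \<le> max (av (fs M x)) (av (fs M x - 1))" using av_diff[of "fs M x" "fs M x - 1"] by simp
        hence "1 \<le> av (fs M x)" using lt by simp
        thus ?thesis using False by simp
      qed
      hence "1 * N x \<le> av (of_bool (x \<in> A) - fs M x) * N x" by (rule mult_right_mono[OF _ Nn])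
      thus ?thesis using h by simp
    qed
    thus ?thesis using BR unfolding approx_def by blast
  qed
  thus "A \<subseteq> X \<and> (\<forall>d>0. \<exists>B. approx A d B)" using AX by blast
next
  assume a: "A \<subseteq> X \<and> (\<forall>d>0. \<exists>B. approx A d B)"
  define Bs where "Bs n = (SOME B. approx A (1 / real (Suc n)) B)" for n
  have Bs: "approx A (1 / real (Suc n)) (Bs n)" for n
    unfolding Bs_def by (rule someI_ex) (use a in simp)
  define fs where "fs n = (\<lambda>x. of_bool (x \<in> Bs n) :: 'k)" for n
  have st: "step_function R (fs n)" for n
    unfolding step_function_def
    by (rule exI[of _ 1], rule exI[of _ "\<lambda>_. 1"], rule exI[of _ "\<lambda>_. Bs n"])
      (use Bs[of n] in \<open>auto simp: approx_def fs_def\<close>)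
  have conv: "\<exists>M. \<forall>n\<ge>M. \<forall>x\<in>X. av (of_bool (x \<in> A) - fs n x) * N x \<le> e" if e: "e > 0" for e
  proof -
    obtain M where M: "inverse (real (Suc M)) < e" using reals_Archimedean[OF e] by blast
    have "av (of_bool (x \<in> A) - fs n x) * N x \<le> e" if n: "n \<ge> M" and x: "x \<in> X" for n x
    proof (cases "(x \<in> A) = (x \<in> Bs n)")
      case True thus ?thesis using e by (simp add: fs_def)
    next
      case False
      hence "N x \<le> 1 / real (Suc n)" using Bs[of n] x unfolding approx_def by blast
      also have "\<dots> \<le> inverse (real (Suc M))" using n by (simp add: inverse_eq_divide frac_le)
      finally have "N x \<le> e" using M by simp
      moreover have "av (of_bool (x \<in> A) - fs n x) = 1" using False by (cases "x \<in> A") (auto simp: fs_def)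
      ultimately show ?thesis by simp
    qed
    thus ?thesis by blast
  qed
  have "mu_integrable av X R mu (\<lambda>x. of_bool (x \<in> A))"
    unfolding mu_integrable_def using st conv by blast
  thus "A \<in> completion av X R mu" using a unfolding completion_def by blast
qed

abbreviation R' where "R' \<equiv> completion av X R mu"

lemma approx_close:
  assumes "approx A d1 B1" "approx A d2 B2" "0 \<le> d1" "0 \<le> d2"
  shows "av (mu B1 - mu B2) \<le> max d1 d2"
proof (rule mu_close)
  show "B1 \<in> R" "B2 \<in> R" using assms unfolding approx_def by blast+
  show "0 \<le> max d1 d2" using assms by simp
  fix x assume x: "x \<in> X" "(x \<in> B1) \<noteq> (x \<in> B2)"
  show "N x \<le> max d1 d2"
  proof (cases "(x \<in> A) = (x \<in> B1)")
    case True
    hence "(x \<in> A) \<noteq> (x \<in> B2)" using x by blast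
    hence "N x \<le> d2" using assms(2) x(1) unfolding approx_def by blast
    thus ?thesis by simp
  next
    case False
    hence "N x \<le> d1" using assms(1) x(1) unfolding approx_def by blast
    thus ?thesis by simp
  qed
qed

definition good :: "'a set \<Rightarrow> 'k \<Rightarrow> bool" where
  "good A v \<longleftrightarrow> (\<forall>d>0. \<forall>B. approx A d B \<longrightarrow> av (mu B - v) \<le> d)"

definition nu :: "'a set \<Rightarrow> 'k" where "nu A = (SOME v. good A v)"

lemma good_ex:
  assumes A: "A \<in> R'" shows "\<exists>v. good A v"
proof -
  define Bs where "Bs n = (SOME B. approx A (1 / real (Suc n)) B)" for n
  have Bs: "approx A (1 / real (Suc n)) (Bs n)" for n
    unfolding Bs_def by (rule someI_ex) (use A compl_iff in simp)
  define s where "s n = mu (Bs n)" for n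
  have close: "av (s m - s n) \<le> max (1 / real (Suc m)) (1 / real (Suc n))" for m n
    unfolding s_def by (rule approx_close[OF Bs Bs]) simp_all
  have "\<forall>e>0. \<exists>M. \<forall>m\<ge>M. \<forall>n\<ge>M. av (s m - s n) < e"
  proof (intro allI impI)
    fix e :: real assume e: "e > 0"
    obtain M where M: "inverse (real (Suc M)) < e" using reals_Archimedean[OF e] by blast
    have "av (s m - s n) < e" if "m \<ge> M" "n \<ge> M" for m n
    proof -
      have "1 / real (Suc m) \<le> inverse (real (Suc M))" "1 / real (Suc n) \<le> inverse (real (Suc M))"
        using that by (simp_all add: inverse_eq_divide frac_le)
      thus ?thesis using close[of m n] M by linarith
    qed
    thus "\<exists>M. \<forall>m\<ge>M. \<forall>n\<ge>M. av (s m - s n) < e" by blast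
  qed
  then obtain L where L: "\<And>e. e > 0 \<Longrightarrow> \<exists>M. \<forall>n\<ge>M. av (s n - L) < e" using cauchy by blast
  have "good A L" unfolding good_def
  proof (intro allI impI)
    fix d :: real and B assume d: "d > 0" and B: "approx A d B"
    show "av (mu B - L) \<le> d"
    proof (rule field_le_epsilon)
      fix eps :: real assume eps: "eps > 0"
      obtain M1 where M1: "\<forall>n\<ge>M1. av (s n - L) < eps" using L[OF eps] by blast
      obtain M2 where M2: "inverse (real (Suc M2)) < eps" using reals_Archimedean[OF eps] by blast
      define n where "n = max M1 M2"
      have 1: "av (s n - L) < eps" using M1 unfolding n_def by simp
      have "1 / real (Suc n) \<le> inverse (real (Suc M2))" unfolding n_def by (simp add: inverse_eq_divide frac_le)
      hence 2: "1 / real (Suc n) < eps" using M2 by linarith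
      have 3: "av (mu B - s n) \<le> max d (1 / real (Suc n))"
        unfolding s_def by (rule approx_close[OF B Bs]) (use d in simp_all)
      have "av (mu B - L) \<le> max (av (mu B - s n)) (av (s n - L))" by (rule av_tri)
      thus "av (mu B - L) \<le> d + eps" using 1 2 3 d eps by linarith
    qed
  qed
  thus ?thesis by blast
qed

lemma good_unique:
  assumes A: "A \<in> R'" and v: "good A v" and w: "good A w" shows "v = w"
proof -
  have "av (v - w) \<le> d" if d: "d > 0" for d
  proof -
    obtain B where B: "approx A d B" using A d compl_iff by blast
    have "av (v - w) \<le> max (av (v - mu B)) (av (mu B - w))" by (rule av_tri)
    moreover have "av (mu B - v) \<le> d" "av (mu B - w) \<le> d" using v w B d unfolding good_def by blast+
    ultimately show ?thesis using av_diff_commute[of v "mu B"] by simp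
  qed
  hence "v - w = 0" by (rule av_eps)
  thus ?thesis by simp
qed

lemma good_nu: "A \<in> R' \<Longrightarrow> good A (nu A)"
  unfolding nu_def by (rule someI_ex) (rule good_ex)

lemma nu_close: "A \<in> R' \<Longrightarrow> approx A d B \<Longrightarrow> d > 0 \<Longrightarrow> av (mu B - nu A) \<le> d"
  using good_nu unfolding good_def by blast

lemma R_sub: "A \<in> R \<Longrightarrow> A \<in> R'"
  unfolding compl_iff approx_def using subR by blast

lemma good_R: "A \<in> R \<Longrightarrow> good A (mu A)"
  unfolding good_def
proof (intro allI impI)
  fix d :: real and B assume A: "A \<in> R" and d: "d > 0" and B: "approx A d B"
  have "approx A 0 A" using A unfolding approx_def by blast
  from approx_close[OF B this] d show "av (mu B - mu A) \<le> d" by simp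
qed

lemma nu_R: "A \<in> R \<Longrightarrow> nu A = mu A"
  using good_unique[OF R_sub good_nu[OF R_sub] good_R] by blast

end



context pm
begin

lemma R'_sub: "A \<in> R' \<Longrightarrow> A \<subseteq> X"
  using compl_iff by blast

lemma R'_approx: "A \<in> R' \<Longrightarrow> d > 0 \<Longrightarrow> \<exists>B. approx A d B"
  using compl_iff by blast

lemma R'_ops:
  assumes A1: "A1 \<in> R'" and A2: "A2 \<in> R'"
  shows "A1 \<union> A2 \<in> R'" "A1 \<inter> A2 \<in> R'" "A1 - A2 \<in> R'"
proof -
  have X1: "A1 \<subseteq> X" and X2: "A2 \<subseteq> X" using A1 A2 R'_sub by blast+
  have "\<exists>B. approx (A1 \<union> A2) d B \<and> approx (A1 \<inter> A2) d (B) \<or> True" for d by blast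
  have gen: "\<exists>B. approx (f A1 A2) d B"
    if d: "d > 0" and fR: "\<And>B1 B2. B1 \<in> R \<Longrightarrow> B2 \<in> R \<Longrightarrow> f B1 B2 \<in> R"
      and fx: "\<And>x B1 B2. (x \<in> f A1 A2) \<noteq> (x \<in> f B1 B2) \<Longrightarrow> (x \<in> A1) \<noteq> (x \<in> B1) \<or> (x \<in> A2) \<noteq> (x \<in> B2)"
    for f :: "'a set \<Rightarrow> 'a set \<Rightarrow> 'a set" and d
  proof -
    obtain B1 where B1: "approx A1 d B1" using R'_approx[OF A1 d] by blast
    obtain B2 where B2: "approx A2 d B2" using R'_approx[OF A2 d] by blast
    have "approx (f A1 A2) d (f B1 B2)"
      unfolding approx_def
    proof (intro conjI ballI impI)
      show "f B1 B2 \<in> R" using B1 B2 fR unfolding approx_def by blast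
      fix x assume "x \<in> X" "(x \<in> f A1 A2) \<noteq> (x \<in> f B1 B2)"
      thus "N x \<le> d" using fx[of x B1 B2] B1 B2 unfolding approx_def by blast
    qed
    thus ?thesis by blast
  qed
  show "A1 \<union> A2 \<in> R'" unfolding compl_iff
    using X1 X2 gen[of _ "(\<union>)"] rUn by blast
  show "A1 \<inter> A2 \<in> R'" unfolding compl_iff
    using X1 X2 gen[of _ "(\<inter>)"] rInt by blast
  show "A1 - A2 \<in> R'" unfolding compl_iff
    using X1 X2 gen[of _ "(-)"] rDiff by blast
qed

lemma nu_add:
  assumes A1: "A1 \<in> R'" and A2: "A2 \<in> R'" and dj: "A1 \<inter> A2 = {}"
  shows "nu (A1 \<union> A2) = nu A1 + nu A2"
proof -
  have "av (nu (A1 \<union> A2) - (nu A1 + nu A2)) \<le> d" if d: "d > 0" for d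
  proof -
    obtain B1 where B1: "approx A1 d B1" using R'_approx[OF A1 d] by blast
    obtain B2 where B2: "approx A2 d B2" using R'_approx[OF A2 d] by blast
    have R1: "B1 \<in> R" and R2: "B2 \<in> R" using B1 B2 unfolding approx_def by blast+
    have B2': "approx A2 d (B2 - B1)"
      unfolding approx_def
    proof (intro conjI ballI impI)
      show "B2 - B1 \<in> R" using rDiff[OF R2 R1] .
      fix x assume x: "x \<in> X" "(x \<in> A2) \<noteq> (x \<in> B2 - B1)"
      show "N x \<le> d"
      proof (cases "(x \<in> A2) = (x \<in> B2)")
        case True
        hence "x \<in> B1" "x \<in> A2" using x(2) by auto
        hence "(x \<in> A1) \<noteq> (x \<in> B1)" using dj by blast
        thus ?thesis using B1 x(1) unfolding approx_def by blast
      next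
        case False thus ?thesis using B2 x(1) unfolding approx_def by blast
      qed
    qed
    have B12: "approx (A1 \<union> A2) d (B1 \<union> (B2 - B1))"
      unfolding approx_def
    proof (intro conjI ballI impI)
      show "B1 \<union> (B2 - B1) \<in> R" using rUn[OF R1 rDiff[OF R2 R1]] .
      fix x assume x: "x \<in> X" "(x \<in> A1 \<union> A2) \<noteq> (x \<in> B1 \<union> (B2 - B1))"
      hence "(x \<in> A1) \<noteq> (x \<in> B1) \<or> (x \<in> A2) \<noteq> (x \<in> B2 - B1)" by blast
      thus "N x \<le> d" using B1 B2' x(1) unfolding approx_def by blast
    qed
    have U: "A1 \<union> A2 \<in> R'" using R'_ops[OF A1 A2] by blast
    have e1: "av (mu (B1 \<union> (B2 - B1)) - nu (A1 \<union> A2)) \<le> d" by (rule nu_close[OF U B12 d])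
    have e2: "av (mu B1 - nu A1) \<le> d" by (rule nu_close[OF A1 B1 d])
    have e3: "av (mu (B2 - B1) - nu A2) \<le> d" by (rule nu_close[OF A2 B2' d])
    have m: "mu (B1 \<union> (B2 - B1)) = mu B1 + mu (B2 - B1)" by (rule add[OF R1 rDiff[OF R2 R1]]) blast
    have eq: "nu (A1 \<union> A2) - (nu A1 + nu A2) =
        - (mu (B1 \<union> (B2 - B1)) - nu (A1 \<union> A2)) + ((mu B1 - nu A1) + (mu (B2 - B1) - nu A2))"
      using m by (simp add: algebra_simps)
    have "av ((mu B1 - nu A1) + (mu (B2 - B1) - nu A2)) \<le> d"
      using ultra[of "mu B1 - nu A1" "mu (B2 - B1) - nu A2"] e2 e3 by simp
    moreover have "av (- (mu (B1 \<union> (B2 - B1)) - nu (A1 \<union> A2))) \<le> d" using e1 by (simp only: av_minus)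
    ultimately have "av (- (mu (B1 \<union> (B2 - B1)) - nu (A1 \<union> A2)) + ((mu B1 - nu A1) + (mu (B2 - B1) - nu A2))) \<le> d"
      by (intro order_trans[OF ultra]) simp
    thus ?thesis unfolding eq .
  qed
  hence "nu (A1 \<union> A2) - (nu A1 + nu A2) = 0" by (rule av_eps)
  thus ?thesis by simp
qed

lemma nu_le1: "A \<in> R' \<Longrightarrow> av (nu A) \<le> 1"
proof -
  assume A: "A \<in> R'"
  obtain B where B: "approx A 1 B" using R'_approx[OF A, of 1] by auto
  have "av (nu A - 0) \<le> max (av (nu A - mu B)) (av (mu B - 0))" by (rule av_tri)
  moreover have "av (nu A - mu B) \<le> 1" using nu_close[OF A B] av_diff_commute by simp
  moreover have "av (mu B) \<le> 1" using le1 B unfolding approx_def by blast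
  ultimately show ?thesis by simp
qed

lemma lemma2:
  assumes A: "A \<in> R'" and e: "0 \<le> e" and Ne: "\<And>x. x \<in> A \<Longrightarrow> N x \<le> e"
  shows "av (nu A) \<le> e"
proof (rule field_le_epsilon)
  fix d :: real assume d: "d > 0"
  obtain B where B: "approx A d B" using R'_approx[OF A d] by blast
  have BR: "B \<in> R" using B unfolding approx_def by blast
  have "av (nu A - 0) \<le> max (av (nu A - mu B)) (av (mu B - 0))" by (rule av_tri)
  moreover have "av (nu A - mu B) \<le> d" using nu_close[OF A B d] av_diff_commute by simp
  moreover have "av (mu B) \<le> max e d"
  proof (rule lemma1[OF BR BR order_refl])
    show "0 \<le> max e d" using e by simp
    fix x assume x: "x \<in> B"
    hence xX: "x \<in> X" using subR[OF BR] by blast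
    show "N x \<le> max e d"
    proof (cases "x \<in> A")
      case True thus ?thesis using Ne[of x] by simp
    next
      case False thus ?thesis using B xX x unfolding approx_def by force
    qed
  qed
  ultimately show "av (nu A) \<le> e + d" using e d by simp
qed

lemma nu_cont:
  assumes SR: "S \<subseteq> R'" and sh: "shrinking S" and em: "\<Inter>S = {}" and e: "e > 0"
  shows "\<exists>B\<in>S. \<forall>A\<in>S. A \<subseteq> B \<longrightarrow> av (nu A) \<le> e"
proof (rule ccontr)
  assume neg: "\<not> (\<exists>B\<in>S. \<forall>A\<in>S. A \<subseteq> B \<longrightarrow> av (nu A) \<le> e)"
  have pt: "\<exists>y\<in>B. N y > e" if B: "B \<in> S" for B
  proof (rule ccontr)
    assume "\<not> (\<exists>y\<in>B. N y > e)"
    hence le: "\<And>y. y \<in> B \<Longrightarrow> N y \<le> e" by (simp add: not_less)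
    have "\<forall>A\<in>S. A \<subseteq> B \<longrightarrow> av (nu A) \<le> e"
    proof (intro ballI impI)
      fix A assume "A \<in> S" "A \<subseteq> B"
      thus "av (nu A) \<le> e" using lemma2[of A e] SR le e by auto
    qed
    thus False using neg B by blast
  qed
  define Y where "Y = {y\<in>X. N y > e}"
  have Sne: "S \<noteq> {}" using em by auto
  have "fip X (insert Y S)" unfolding fip_def
  proof (intro allI impI)
    fix G assume G: "finite G \<and> G \<subseteq> insert Y S"
    have "\<exists>C\<in>S. C \<subseteq> \<Inter>(G - {Y})"
    proof (cases "G - {Y} = {}")
      case True thus ?thesis using Sne by auto
    next
      case False thus ?thesis using shrinking_fin[OF sh, of "G - {Y}"] G by blast
    qed
    then obtain C where C: "C \<in> S" "C \<subseteq> \<Inter>(G - {Y})" by blast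
    obtain y where y: "y \<in> C" "N y > e" using pt[OF C(1)] by blast
    have yX: "y \<in> X" using R'_sub C(1) SR y(1) by blast
    have "y \<in> \<Inter>G"
    proof
      fix g assume "g \<in> G"
      thus "y \<in> g" using C(2) y yX unfolding Y_def by (cases "g = Y") auto
    qed
    thus "X \<inter> \<Inter>G \<noteq> {}" using yX by blast
  qed
  then obtain U where U: "ultra_on X U" "insert Y S \<subseteq> U" using ultra_exists by blast
  have YU: "Y \<in> U" and SU: "S \<subseteq> U" using U(2) by auto
  have dich: "E \<in> U \<or> X - E \<in> U" if "E \<subseteq> X" for E using U(1) that unfolding ultra_on_def by blast
  define UR where "UR = U \<inter> R"
  have XUR: "X \<in> UR" unfolding UR_def using ultra_X[OF U(1)] XR by blast
  have URe: "\<Inter>UR = {}"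
  proof (rule ccontr)
    assume "\<Inter>UR \<noteq> {}"
    then obtain z where z: "z \<in> \<Inter>UR" by blast
    have zX: "z \<in> X" using z XUR by blast
    show False
    proof (cases "N z > e / 2")
      case True
      have "z \<in> A" if A: "A \<in> S" for A
      proof -
        have AR': "A \<in> R'" using A SR by blast
        obtain B where B: "approx A (e/2) B" using R'_approx[OF AR'] e by force
        have BR: "B \<in> R" using B unfolding approx_def by blast
        have "B \<in> U"
        proof (rule ccontr)
          assume "B \<notin> U"
          hence "X - B \<in> U" using dich[OF subR[OF BR]] by blast
          from ultra_fip3[OF U(1) _ YU this, of A] A SU
          obtain y where y: "y \<in> X" "y \<in> A" "y \<in> Y" "y \<notin> B" by blast
          have "N y \<le> e/2" using B y unfolding approx_def by blast
          thus False using y(3) e unfolding Y_def by simp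
        qed
        hence "z \<in> B" using z BR unfolding UR_def by blast
        show "z \<in> A"
        proof (rule ccontr)
          assume "z \<notin> A"
          hence "N z \<le> e/2" using B zX \<open>z \<in> B\<close> unfolding approx_def by blast
          thus False using True by simp
        qed
      qed
      hence "z \<in> \<Inter>S" by blast
      thus False using em by blast
    next
      case False
      hence "N z < e" using e by simp
      then obtain V where V: "V \<in> R" "z \<in> V" "nrm V < e" using N_less[OF zX] by blast
      have "V \<notin> U"
      proof
        assume "V \<in> U"
        from ultra_fip2[OF U(1) this YU] obtain y where y: "y \<in> V" "y \<in> Y" by blast
        have "N y \<le> nrm V" by (rule N_le[OF V(1) y(1)])
        thus False using y(2) V(3) unfolding Y_def by simp
      qed
      hence "X - V \<in> UR" using dich[OF subR[OF V(1)]] rDiff[OF XR V(1)] unfolding UR_def by blast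
      thus False using z V(2) by blast
    qed
  qed
  have URR: "UR \<subseteq> R" unfolding UR_def by blast
  have shUR: "shrinking UR" unfolding shrinking_def
  proof (intro ballI)
    fix A1 A2 assume "A1 \<in> UR" "A2 \<in> UR"
    hence "A1 \<inter> A2 \<in> UR" using ultra_Int[OF U(1)] subR rInt unfolding UR_def by blast
    thus "\<exists>C\<in>UR. C \<subseteq> A1 \<inter> A2" by blast
  qed
  obtain D where D: "D \<in> UR" "\<And>D'. D' \<in> UR \<Longrightarrow> D' \<subseteq> D \<Longrightarrow> av (mu D') \<le> e"
    using cont[OF URR shUR URe e] by blast
  have DR: "D \<in> R" and DU: "D \<in> U" using D(1) unfolding UR_def by auto
  obtain y where y: "y \<in> D" "y \<in> Y" using ultra_fip2[OF U(1) DU YU] by blast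
  have "N y \<le> nrm D" by (rule N_le[OF DR y(1)])
  hence nD: "nrm D > e" using y(2) unfolding Y_def by simp
  obtain C where C: "C \<in> R" "C \<subseteq> D" "av (mu C) > e"
  proof (rule ccontr)
    assume "\<not> thesis"
    hence "\<And>C. C \<in> R \<Longrightarrow> C \<subseteq> D \<Longrightarrow> av (mu C) \<le> e" using that by (meson not_le)
    hence "nrm D \<le> e" by (rule nrm_least[OF DR])
    thus False using nD by simp
  qed
  show False
  proof (cases "C \<in> U")
    case True
    hence "C \<in> UR" using C(1) unfolding UR_def by blast
    thus False using D(2)[of C] C by simp
  next
    case False
    hence "X - C \<in> U" using dich[OF subR[OF C(1)]] by blast
    hence "D \<inter> (X - C) \<in> U" using ultra_Int[OF U(1) DU _ subR[OF DR]] by blast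
    moreover have "D \<inter> (X - C) = D - C" using subR[OF DR] by blast
    ultimately have "D - C \<in> UR" using rDiff[OF DR C(1)] unfolding UR_def by simp
    hence 1: "av (mu (D - C)) \<le> e" using D(2) by blast
    have 2: "av (mu D) \<le> e" using D by blast
    have "mu D = mu C + mu (D - C)" using mu_split[OF DR C(1)] C(2) by (simp add: Int_absorb1)
    hence "mu C = mu D - mu (D - C)" by simp
    hence "av (mu C) \<le> e" using av_diff[of "mu D" "mu (D - C)"] 1 2 by simp
    thus False using C(3) by simp
  qed
qed

theorem extension: "\<exists>nu. is_prob_measure av X R' nu \<and> (\<forall>A\<in>R. nu A = mu A)"
proof (intro exI conjI)
  show "\<forall>A\<in>R. nu A = mu A" using nu_R by blast
  have XR': "X \<in> R'" using R_sub[OF XR] .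
  have cov: "covering_ring X R'" unfolding covering_ring_def ring_closed_def
  proof (intro conjI)
    show "R' \<subseteq> Pow X" using R'_sub by blast
    show "\<forall>A\<in>R'. \<forall>B\<in>R'. A \<union> B \<in> R' \<and> A \<inter> B \<in> R' \<and> A - B \<in> R'" using R'_ops by blast
    show "\<Union>R' = X" using R'_sub XR' by blast
  qed
  have bd: "\<forall>A\<in>R'. bdd_above {av (nu B) | B. B \<in> R' \<and> B \<subseteq> A}"
  proof
    fix A assume "A \<in> R'"
    show "bdd_above {av (nu B) | B. B \<in> R' \<and> B \<subseteq> A}"
      by (rule bdd_aboveI[of _ 1]) (use nu_le1 in blast)
  qed
  have nuX: "nu X = 1" using nu_R[OF XR] muX by simp
  have snX: "set_norm av R' nu X = 1" unfolding set_norm_def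
  proof (rule cSup_eq_maximum)
    show "1 \<in> {av (nu B) | B. B \<in> R' \<and> B \<subseteq> X}" using XR' nuX by force
    fix y assume "y \<in> {av (nu B) | B. B \<in> R' \<and> B \<subseteq> X}"
    thus "y \<le> 1" using nu_le1 by blast
  qed
  have ad: "\<forall>A\<in>R'. \<forall>B\<in>R'. A \<inter> B = {} \<longrightarrow> nu (A \<union> B) = nu A + nu B" using nu_add by blast
  have ct: "\<forall>S. S \<subseteq> R' \<and> shrinking S \<and> \<Inter>S = {} \<longrightarrow>
        (\<forall>e>0. \<exists>B\<in>S. \<forall>A\<in>S. A \<subseteq> B \<longrightarrow> av (nu A) \<le> e)" using nu_cont by blast
  show "is_prob_measure av X R' nu"
    unfolding is_prob_measure_def is_measure_def using cov ad bd ct XR' nuX snX by blast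
qed

end




context nav begin
lemma nav_self: "nav av"
  by (rule nav.intro) (fact nonneg zero_iff mult ultra cauchy)+
end

locale prod_setting = nav av for av :: "'k::field \<Rightarrow> real" +
  fixes L :: "'i set" and Xs :: "'i \<Rightarrow> 'a set" and Rs :: "'i \<Rightarrow> 'a set set"
    and mus :: "'i \<Rightarrow> 'a set \<Rightarrow> 'k" and mu :: "('i \<Rightarrow> 'a) set \<Rightarrow> 'k"
  assumes prob: "\<And>j. j \<in> L \<Longrightarrow> is_prob_measure av (Xs j) (Rs j) (mus j)"
    and additive: "\<And>A B. A \<in> cylinder_ring L Xs Rs \<Longrightarrow> B \<in> cylinder_ring L Xs Rs \<Longrightarrow>
                     A \<inter> B = {} \<Longrightarrow> mu (A \<union> B) = mu A + mu B"
    and cyl: "\<And>J A. finite J \<Longrightarrow> J \<subseteq> L \<Longrightarrow> (\<forall>j\<in>J. A j \<in> Rs j) \<Longrightarrow>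
                mu (PiE L Xs \<inter> (\<Inter>j\<in>J. {x. x j \<in> A j})) = (\<Prod>j\<in>J. mus j (A j))"
begin

lemma pmj: "j \<in> L \<Longrightarrow> pm av (Xs j) (Rs j) (mus j)"
  by (rule pm.intro[OF nav_self]) (rule pm_axioms.intro, rule prob)

abbreviation PX where "PX \<equiv> PiE L Xs"

definition cyl :: "'i set \<Rightarrow> ('i \<Rightarrow> 'a set) \<Rightarrow> ('i \<Rightarrow> 'a) set" where
  "cyl J A = PX \<inter> (\<Inter>j\<in>J. {x. x j \<in> A j})"

definition T :: "'i \<Rightarrow> 'a set \<Rightarrow> ('i \<Rightarrow> 'a) set" where
  "T k D = PX \<inter> {x. x k \<in> D}"

abbreviation adm where "adm J A \<equiv> finite J \<and> J \<subseteq> L \<and> (\<forall>j\<in>J. A j \<in> Rs j)"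

lemma cylinders_eq: "cylinders L Xs Rs = {cyl J A | J A. adm J A}"
  unfolding cylinders_def cyl_def by blast

definition M where "M = insert {} (cylinders L Xs Rs)"

lemma mu_cyl: "adm J A \<Longrightarrow> mu (cyl J A) = (\<Prod>j\<in>J. mus j (A j))"
  unfolding cyl_def using cyl by blast

lemma cyl_sub: "cyl J A \<subseteq> PX" unfolding cyl_def by blast

lemma T_cyl: "T k D = cyl {k} (\<lambda>_. D)" unfolding T_def cyl_def by auto

lemma T_adm: "k \<in> L \<Longrightarrow> D \<in> Rs k \<Longrightarrow> adm {k} (\<lambda>_. D)" by simp

lemma cyl_empty: "cyl {} A = PX" unfolding cyl_def by simp

lemma Rs_sub: "j \<in> L \<Longrightarrow> D \<in> Rs j \<Longrightarrow> D \<subseteq> Xs j"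
  using pm.subR[OF pmj] by blast

lemma cyl_Int:
  assumes a1: "adm J1 A1" and a2: "adm J2 A2"
  shows "cyl J1 A1 \<inter> cyl J2 A2 = cyl (J1 \<union> J2) (\<lambda>j. (if j \<in> J1 then A1 j else Xs j) \<inter> (if j \<in> J2 then A2 j else Xs j))"
    and "adm (J1 \<union> J2) (\<lambda>j. (if j \<in> J1 then A1 j else Xs j) \<inter> (if j \<in> J2 then A2 j else Xs j))"
proof -
  show "cyl J1 A1 \<inter> cyl J2 A2 = cyl (J1 \<union> J2) (\<lambda>j. (if j \<in> J1 then A1 j else Xs j) \<inter> (if j \<in> J2 then A2 j else Xs j))"
  proof (rule set_eqI)
    fix x
    show "x \<in> cyl J1 A1 \<inter> cyl J2 A2 \<longleftrightarrow> x \<in> cyl (J1 \<union> J2) (\<lambda>j. (if j \<in> J1 then A1 j else Xs j) \<inter> (if j \<in> J2 then A2 j else Xs j))"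
    proof (cases "x \<in> PX")
      case True
      hence xj: "\<And>j. j \<in> L \<Longrightarrow> x j \<in> Xs j" by (auto simp: PiE_iff)
      show ?thesis unfolding cyl_def using True xj a1 a2 by auto
    next
      case False thus ?thesis unfolding cyl_def by blast
    qed
  qed
  show "adm (J1 \<union> J2) (\<lambda>j. (if j \<in> J1 then A1 j else Xs j) \<inter> (if j \<in> J2 then A2 j else Xs j))"
  proof (intro conjI ballI)
    show "finite (J1 \<union> J2)" "J1 \<union> J2 \<subseteq> L" using a1 a2 by auto
    fix j assume j: "j \<in> J1 \<union> J2"
    hence jL: "j \<in> L" using a1 a2 by auto
    have X: "Xs j \<in> Rs j" using pm.XR[OF pmj[OF jL]] .
    have "(if j \<in> J1 then A1 j else Xs j) \<in> Rs j" "(if j \<in> J2 then A2 j else Xs j) \<in> Rs j"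
      using a1 a2 X by auto
    thus "(if j \<in> J1 then A1 j else Xs j) \<inter> (if j \<in> J2 then A2 j else Xs j) \<in> Rs j"
      using pm.rInt[OF pmj[OF jL]] by blast
  qed
qed

lemma M_cyl: "Z \<in> M \<longleftrightarrow> Z = {} \<or> (\<exists>J A. adm J A \<and> Z = cyl J A)"
proof
  assume "Z \<in> M"
  hence "Z = {} \<or> (\<exists>J A. Z = cyl J A \<and> adm J A)" unfolding M_def cylinders_eq by blast
  thus "Z = {} \<or> (\<exists>J A. adm J A \<and> Z = cyl J A)" by blast
next
  assume "Z = {} \<or> (\<exists>J A. adm J A \<and> Z = cyl J A)"
  thus "Z \<in> M" unfolding M_def cylinders_eq by blast
qed

lemma M_cylI: "adm J A \<Longrightarrow> cyl J A \<in> M"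
  unfolding M_def cylinders_eq by blast

lemma M_cases:
  assumes "Z \<in> M" obtains "Z = {}" | J A where "adm J A" "Z = cyl J A"
proof -
  have "Z = {} \<or> (\<exists>J A. adm J A \<and> Z = cyl J A)" using assms by (simp only: M_cyl)
  thus ?thesis using that by fast
qed

lemma M_sub: "Z \<in> M \<Longrightarrow> Z \<subseteq> PX"
proof -
  assume "Z \<in> M"
  hence "Z = {} \<or> (\<exists>J A. adm J A \<and> Z = cyl J A)" by (simp only: M_cyl)
  thus ?thesis using cyl_sub by (elim disjE exE conjE) auto
qed

lemma M_Int: "Z1 \<in> M \<Longrightarrow> Z2 \<in> M \<Longrightarrow> Z1 \<inter> Z2 \<in> M"
proof -
  assume z: "Z1 \<in> M" "Z2 \<in> M"
  show ?thesis
  proof (cases "Z1 = {} \<or> Z2 = {}")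
    case True thus ?thesis unfolding M_def by auto
  next
    case False
    have "Z1 = {} \<or> (\<exists>J A. adm J A \<and> Z1 = cyl J A)" using z(1) by (simp only: M_cyl)
    hence "\<exists>J A. adm J A \<and> Z1 = cyl J A" using False by (elim disjE) simp_all
    then obtain J1 A1 where 1: "adm J1 A1" "Z1 = cyl J1 A1" by fast
    have "Z2 = {} \<or> (\<exists>J A. adm J A \<and> Z2 = cyl J A)" using z(2) by (simp only: M_cyl)
    hence "\<exists>J A. adm J A \<and> Z2 = cyl J A" using False by (elim disjE) simp_all
    then obtain J2 A2 where 2: "adm J2 A2" "Z2 = cyl J2 A2" by fast
    have "Z1 \<inter> Z2 = cyl (J1 \<union> J2) (\<lambda>j. (if j \<in> J1 then A1 j else Xs j) \<inter> (if j \<in> J2 then A2 j else Xs j))"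
      using cyl_Int(1)[OF 1(1) 2(1)] 1(2) 2(2) by simp
    thus ?thesis using M_cylI[OF cyl_Int(2)[OF 1(1) 2(1)]] by simp
  qed
qed

lemma T_M: "k \<in> L \<Longrightarrow> D \<in> Rs k \<Longrightarrow> T k D \<in> M"
  unfolding T_cyl by (rule M_cylI) simp

lemma PX_M: "PX \<in> M"
proof -
  have "adm {} (\<lambda>_. {})" by simp
  thus ?thesis using M_cylI[of "{}" "\<lambda>_. {}"] cyl_empty[of "\<lambda>_. {}"] by simp
qed

lemma cyl_insert: "cyl (insert k J) A = T k (A k) \<inter> cyl J A"
  unfolding cyl_def T_def by auto

lemma M_diff_cyl:
  assumes "adm J A"
  shows "\<forall>Z\<in>M. \<exists>C\<subseteq>M. finite C \<and> disjoint C \<and> Z - cyl J A = \<Union>C"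
proof -
  have "finite J" using assms by blast
  thus ?thesis using assms
  proof (induction J rule: finite_induct)
    case empty
    show ?case
    proof
      fix Z assume "Z \<in> M"
      hence "Z - cyl {} A = \<Union>{}" using M_sub cyl_empty by auto
      thus "\<exists>C\<subseteq>M. finite C \<and> disjoint C \<and> Z - cyl {} A = \<Union>C" by (intro exI[of _ "{}"]) (simp add: disjoint_def)
    qed
  next
    case (insert k J)
    have kL: "k \<in> L" and Ak: "A k \<in> Rs k" using insert.prems by auto
    have admJ: "adm J A" using insert.prems insert.hyps(1) by simp
    have IH: "\<forall>Z\<in>M. \<exists>C\<subseteq>M. finite C \<and> disjoint C \<and> Z - cyl J A = \<Union>C"
      by (rule insert.IH[OF admJ])
    show ?case
    proof
      fix Z assume Z: "Z \<in> M"
      have XA: "Xs k - A k \<in> Rs k" using pm.rDiff[OF pmj[OF kL] pm.XR[OF pmj[OF kL]] Ak] .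
      define Z1 where "Z1 = Z \<inter> T k (Xs k - A k)"
      define Z2 where "Z2 = Z \<inter> T k (A k)"
      have Z1M: "Z1 \<in> M" unfolding Z1_def by (rule M_Int[OF Z T_M[OF kL XA]])
      have Z2M: "Z2 \<in> M" unfolding Z2_def by (rule M_Int[OF Z T_M[OF kL Ak]])
      have "\<exists>C\<subseteq>M. finite C \<and> disjoint C \<and> Z2 - cyl J A = \<Union>C" using IH Z2M by (rule bspec)
      then obtain C where C: "C \<subseteq> M" "finite C" "disjoint C" "Z2 - cyl J A = \<Union>C" by (elim exE conjE) simp
      have ZP: "Z \<subseteq> PX" using M_sub[OF Z] .
      have eq: "Z - cyl (insert k J) A = \<Union>(insert Z1 C)"
      proof -
        have xk: "x k \<in> Xs k" if "x \<in> Z" for x using ZP that kL by (auto simp: PiE_iff)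
        have "Z - cyl (insert k J) A = Z1 \<union> (Z2 - cyl J A)"
          unfolding cyl_insert Z1_def Z2_def T_def using ZP xk by blast
        thus ?thesis using C(4) by simp
      qed
      have dis: "disjoint (insert Z1 C)"
        unfolding disjoint_def
      proof (intro ballI impI)
        fix a b assume a: "a \<in> insert Z1 C" and b: "b \<in> insert Z1 C" and ab: "a \<noteq> b"
        have sub2: "\<And>c. c \<in> C \<Longrightarrow> c \<subseteq> T k (A k)" using C(4) unfolding Z2_def by blast
        have sub1: "Z1 \<inter> T k (A k) = {}" unfolding Z1_def T_def by blast
        show "a \<inter> b = {}"
        proof (cases "a = Z1")
          case True
          hence "b \<in> C" using b ab by blast
          thus ?thesis using True sub1 sub2[of b] by blast
        next
          case False
          hence aC: "a \<in> C" using a by blast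
          show ?thesis
          proof (cases "b = Z1")
            case True thus ?thesis using aC sub1 sub2[of a] by blast
          next
            case False
            hence "b \<in> C" using b by blast
            thus ?thesis using aC ab C(3) unfolding disjoint_def by blast
          qed
        qed
      qed
      show "\<exists>C\<subseteq>M. finite C \<and> disjoint C \<and> Z - cyl (insert k J) A = \<Union>C"
        by (intro exI[of _ "insert Z1 C"] conjI) (use Z1M C(1,2) dis eq in simp_all)
    qed
  qed
qed

lemma semiring: "semiring_of_sets PX M"
proof
  show "M \<subseteq> Pow PX" using M_sub by blast
  show "{} \<in> M" unfolding M_def by (rule insertI1)
  fix a b assume a: "a \<in> M" and b: "b \<in> M"
  show "a \<inter> b \<in> M" by (rule M_Int[OF a b])
  show "\<exists>C\<subseteq>M. finite C \<and> disjoint C \<and> a - b = \<Union>C"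
  proof (cases "b = {}")
    case True
    have "disjoint {a}" by (simp add: disjoint_def)
    thus ?thesis using a True by (intro exI[of _ "{a}"]) simp
  next
    case False
    obtain J A where JA: "adm J A" "b = cyl J A" using b False by (elim M_cases) auto
    have "\<exists>C\<subseteq>M. finite C \<and> disjoint C \<and> a - cyl J A = \<Union>C" using M_diff_cyl[OF JA(1)] a by (rule bspec)
    thus ?thesis using JA(2) by simp
  qed
qed

interpretation SR: semiring_of_sets PX M by (rule semiring)
interpretation RG: ring_of_sets PX SR.generated_ring by (rule SR.generating_ring)

abbreviation CR where "CR \<equiv> cylinder_ring L Xs Rs"

lemma PX_cylinders: "PX \<in> cylinders L Xs Rs"
proof -
  have "cyl {} (\<lambda>_. {}) \<in> cylinders L Xs Rs"
    unfolding cylinders_eq by (intro CollectI exI[of _ "{}"] exI[of _ "\<lambda>_. {}"] conjI) simp_all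
  thus ?thesis by (simp add: cyl_empty)
qed

lemma CR_eq: "CR = SR.generated_ring"
proof
  have rc: "ring_closed SR.generated_ring"
    unfolding ring_closed_def using RG.Un RG.Int RG.Diff by blast
  have "cylinders L Xs Rs \<subseteq> SR.generated_ring"
  proof
    fix Z assume "Z \<in> cylinders L Xs Rs"
    hence "Z \<in> M" unfolding M_def by (rule insertI2)
    thus "Z \<in> SR.generated_ring" by (rule SR.generated_ringI_Basic)
  qed
  thus "CR \<subseteq> SR.generated_ring" unfolding cylinder_ring_def ring_generated_def
    by (intro Inter_lower CollectI conjI rc)
next
  show "SR.generated_ring \<subseteq> CR"
    unfolding cylinder_ring_def ring_generated_def
  proof (rule Inter_greatest)
    fix Q assume "Q \<in> {R. cylinders L Xs Rs \<subseteq> R \<and> ring_closed R}"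
    hence sub: "cylinders L Xs Rs \<subseteq> Q" and rc: "ring_closed Q" by simp_all
    show "SR.generated_ring \<subseteq> Q"
    proof
      fix a assume a: "a \<in> SR.generated_ring"
      have PQ: "PX \<in> Q" using sub PX_cylinders by (rule subsetD)
      have eQ: "{} \<in> Q" using rc PQ unfolding ring_closed_def by (metis Diff_cancel)
      have MQ: "M \<subseteq> Q" using sub eQ unfolding M_def by (rule insert_subsetI[rotated])
      obtain C where C: "finite C" "disjoint C" "C \<subseteq> M" "a = \<Union>C" by (rule SR.generated_ringE[OF a])
      have "\<Union>C \<in> Q" using C(1,3)
      proof (induction C rule: finite_induct)
        case empty thus ?case using eQ by simp
      next
        case (insert c C)
        hence "c \<in> Q" "\<Union>C \<in> Q" using MQ by auto
        thus ?case using rc unfolding ring_closed_def by simp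
      qed
      thus "a \<in> Q" using C(4) by simp
    qed
  qed
qed

lemma CR_sub: "A \<in> CR \<Longrightarrow> A \<subseteq> PX"
  unfolding CR_eq by (rule RG.sets_into_space)

lemma CR_Un: "A \<in> CR \<Longrightarrow> B \<in> CR \<Longrightarrow> A \<union> B \<in> CR"
  unfolding CR_eq by (rule RG.Un)
lemma CR_Int: "A \<in> CR \<Longrightarrow> B \<in> CR \<Longrightarrow> A \<inter> B \<in> CR"
  unfolding CR_eq by (rule RG.Int)
lemma CR_Diff: "A \<in> CR \<Longrightarrow> B \<in> CR \<Longrightarrow> A - B \<in> CR"
  unfolding CR_eq by (rule RG.Diff)

lemma M_CR: "Z \<in> M \<Longrightarrow> Z \<in> CR"
  unfolding CR_eq by (rule SR.generated_ringI_Basic)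

lemma PX_CR: "PX \<in> CR" by (rule M_CR[OF PX_M])

lemma empty_CR: "{} \<in> CR" using CR_Diff[OF PX_CR PX_CR] by simp

lemma mu_empty: "mu {} = 0"
proof -
  have "mu {} + 0 = mu {} + mu {}" using additive[OF empty_CR empty_CR] by simp
  thus ?thesis by (metis add_left_cancel)
qed

lemma mu_Union: "finite C \<Longrightarrow> C \<subseteq> M \<Longrightarrow> disjoint C \<Longrightarrow> mu (\<Union>C) = (\<Sum>Z\<in>C. mu Z)"
proof (induction C rule: finite_induct)
  case empty thus ?case by (simp add: mu_empty)
next
  case (insert c C)
  have dC: "disjoint C" using insert.prems(2) by (simp add: pairwise_insert)
  have cb: "\<forall>b\<in>C. c \<inter> b = {}"
  proof
    fix b assume b: "b \<in> C"
    hence "c \<noteq> b" using insert.hyps(2) by blast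
    thus "c \<inter> b = {}" using insert.prems(2) b unfolding disjoint_def by simp
  qed
  have cC: "c \<inter> \<Union>C = {}" using cb by blast
  have cM: "c \<in> M" and CM: "C \<subseteq> M" using insert.prems(1) by simp_all
  have "\<Union>C \<in> CR" unfolding CR_eq by (rule SR.generated_ringI[OF insert.hyps(1) dC CM refl])
  hence "mu (c \<union> \<Union>C) = mu c + mu (\<Union>C)" using additive[OF M_CR[OF cM]] cC by simp
  thus ?case using insert.IH[OF CM dC] insert.hyps by simp
qed

lemma CR_decomp: "A \<in> CR \<Longrightarrow> \<exists>C. finite C \<and> C \<subseteq> M \<and> disjoint C \<and> A = \<Union>C"
proof -
  assume "A \<in> CR"
  hence "A \<in> SR.generated_ring" by (simp add: CR_eq)
  then obtain C where C: "finite C" "disjoint C" "C \<subseteq> M" "A = \<Union>C" by (rule SR.generated_ringE)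
  thus ?thesis by blast
qed

lemma M_le1: "Z \<in> M \<Longrightarrow> av (mu Z) \<le> 1"
proof -
  assume "Z \<in> M"
  then consider "Z = {}" | J A where "adm J A" "Z = cyl J A" by (elim M_cases) auto
  thus ?thesis
  proof cases
    case 1 thus ?thesis by (simp add: mu_empty)
  next
    case 2
    have "av (\<Prod>j\<in>J. mus j (A j)) \<le> 1"
    proof (rule av_prod_le1)
      show "finite J" using 2 by blast
      fix j assume "j \<in> J"
      hence "j \<in> L" "A j \<in> Rs j" using 2 by auto
      thus "av (mus j (A j)) \<le> 1" using pm.le1[OF pmj] by blast
    qed
    thus ?thesis using 2 mu_cyl by simp
  qed
qed

lemma CR_le1: "A \<in> CR \<Longrightarrow> av (mu A) \<le> 1"
proof -
  assume "A \<in> CR"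
  then obtain C where C: "finite C" "C \<subseteq> M" "disjoint C" "A = \<Union>C" using CR_decomp by blast
  have "av (\<Sum>Z\<in>C. mu Z) \<le> 1" by (rule av_sum_le) (use C M_le1 in auto)
  thus ?thesis using mu_Union C by simp
qed

lemma T_bound:
  assumes k: "k \<in> L" and D: "D \<in> Rs k" and W: "W \<in> CR" "W \<subseteq> T k D"
  shows "av (mu W) \<le> set_norm av (Rs k) (mus k) D"
proof -
  interpret K: pm av "Xs k" "Rs k" "mus k" by (rule pmj[OF k])
  have nn: "0 \<le> K.nrm D" using K.nrm_nonneg[OF D] .
  obtain C where C: "finite C" "C \<subseteq> M" "disjoint C" "W = \<Union>C" using CR_decomp[OF W(1)] by blast
  have "av (mu Z) \<le> K.nrm D" if Z: "Z \<in> C" for Z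
  proof -
    have ZM: "Z \<in> M" and ZT: "Z \<subseteq> T k D" using Z C W(2) by auto
    then consider "Z = {}" | J A where "adm J A" "Z = cyl J A" by (elim M_cases) auto
    thus ?thesis
    proof cases
      case 1 thus ?thesis using nn by (simp add: mu_empty)
    next
      case 2
      define A' where "A' = A(k := D \<inter> (if k \<in> J then A k else Xs k))"
      have A'k: "A' k \<in> Rs k" unfolding A'_def using 2 D K.rInt K.XR by auto
      have adm': "adm (insert k J) A'" using 2 A'k k unfolding A'_def by auto
      have eqZ: "Z = cyl (insert k J) A'"
      proof -
        have "Z = Z \<inter> T k D" using ZT by blast
        also have "\<dots> = cyl (insert k J) A'"
        proof (rule set_eqI)
          fix x
          show "x \<in> Z \<inter> T k D \<longleftrightarrow> x \<in> cyl (insert k J) A'"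
          proof
            assume h: "x \<in> Z \<inter> T k D"
            hence xP: "x \<in> PX" and xA: "\<forall>j\<in>J. x j \<in> A j" and xD: "x k \<in> D"
              unfolding 2(2) cyl_def T_def by auto
            have xk: "x k \<in> Xs k" using xP k by (auto simp: PiE_iff)
            have "\<forall>j\<in>insert k J. x j \<in> A' j"
              unfolding A'_def using xA xD xk by auto
            thus "x \<in> cyl (insert k J) A'" using xP unfolding cyl_def by auto
          next
            assume h: "x \<in> cyl (insert k J) A'"
            hence xP: "x \<in> PX" and xA': "\<forall>j\<in>insert k J. x j \<in> A' j" unfolding cyl_def by auto
            have "x k \<in> D" using xA' unfolding A'_def by auto
            moreover have "\<forall>j\<in>J. x j \<in> A j"
            proof
              fix j assume j: "j \<in> J"
              show "x j \<in> A j"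
              proof (cases "j = k")
                case True thus ?thesis using xA' j unfolding A'_def by auto
              next
                case False thus ?thesis using xA' j unfolding A'_def by auto
              qed
            qed
            ultimately show "x \<in> Z \<inter> T k D" using xP unfolding 2(2) cyl_def T_def by auto
          qed
        qed
        finally show ?thesis .
      qed
      have "mu Z = (\<Prod>j\<in>insert k J. mus j (A' j))" using mu_cyl[OF adm'] eqZ by simp
      also have "\<dots> = mus k (A' k) * (\<Prod>j\<in>J - {k}. mus j (A' j))"
        using 2 by (simp add: prod.insert_remove)
      finally have muZ: "av (mu Z) = av (mus k (A' k)) * av (\<Prod>j\<in>J - {k}. mus j (A' j))"
        by (simp add: mult)
      have p1: "av (\<Prod>j\<in>J - {k}. mus j (A' j)) \<le> 1"
      proof (rule av_prod_le1)
        show "finite (J - {k})" using 2 by blast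
        fix j assume "j \<in> J - {k}"
        hence "j \<in> L" "A' j \<in> Rs j" using adm' by auto
        thus "av (mus j (A' j)) \<le> 1" using pm.le1[OF pmj] by blast
      qed
      have p2: "av (mus k (A' k)) \<le> K.nrm D"
        by (rule K.nrm_upper[OF D A'k]) (simp add: A'_def)
      have "av (mus k (A' k)) * av (\<Prod>j\<in>J - {k}. mus j (A' j)) \<le> K.nrm D * 1"
        by (rule mult_mono[OF p2 p1 nn nonneg])
      thus ?thesis using muZ by simp
    qed
  qed
  hence "av (\<Sum>Z\<in>C. mu Z) \<le> K.nrm D" by (intro av_sum_le[OF C(1) nn])
  thus ?thesis using mu_Union C by simp
qed

end



context prod_setting
begin

lemma prod_cont:
  assumes SC: "S \<subseteq> CR" and sh: "shrinking S" and em: "\<Inter>S = {}" and e: "e > 0"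
  shows "\<exists>B\<in>S. \<forall>A\<in>S. A \<subseteq> B \<longrightarrow> av (mu A) \<le> e"
proof (rule ccontr)
  assume "\<not> (\<exists>B\<in>S. \<forall>A\<in>S. A \<subseteq> B \<longrightarrow> av (mu A) \<le> e)"
  hence neg: "\<And>B. B \<in> S \<Longrightarrow> \<exists>A\<in>S. A \<subseteq> B \<and> av (mu A) > e" by (auto simp: not_le)
  define small where "small F \<longleftrightarrow> F \<in> CR \<and> (\<forall>W\<in>CR. W \<subseteq> F \<longrightarrow> av (mu W) \<le> e)" for F
  have small_empty: "small {}" unfolding small_def using empty_CR e by (auto simp: mu_empty)
  have small_Un: "small (F1 \<union> F2)" if "small F1" "small F2" for F1 F2
    unfolding small_def
  proof (intro conjI ballI impI)
    have F: "F1 \<in> CR" "F2 \<in> CR" using that unfolding small_def by blast+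
    show "F1 \<union> F2 \<in> CR" using CR_Un[OF F] .
    fix W assume W: "W \<in> CR" "W \<subseteq> F1 \<union> F2"
    have 1: "av (mu (W \<inter> F1)) \<le> e" using that(1) CR_Int[OF W(1) F(1)] unfolding small_def by blast
    have 2: "av (mu (W - F1)) \<le> e" using that(2) CR_Diff[OF W(1) F(1)] W(2) unfolding small_def by blast
    have "mu ((W \<inter> F1) \<union> (W - F1)) = mu (W \<inter> F1) + mu (W - F1)"
      by (rule additive[OF CR_Int[OF W(1) F(1)] CR_Diff[OF W(1) F(1)]]) blast
    hence "mu W = mu (W \<inter> F1) + mu (W - F1)" by (simp add: Int_Diff_Un)
    thus "av (mu W) \<le> e" using ultra[of "mu (W \<inter> F1)" "mu (W - F1)"] 1 2 by simp
  qed
  have gen: "\<exists>F. small F \<and> (\<forall>g\<in>H. PX - F \<subseteq> g)"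
    if "finite H" "H \<subseteq> {PX - F | F. small F}" for H
    using that
  proof (induction H rule: finite_induct)
    case empty
    show ?case by (rule exI[of _ "{}"]) (simp add: small_empty)
  next
    case (insert g H)
    have "H \<subseteq> {PX - F | F. small F}" using insert.prems by simp
    then obtain F where F: "small F" "\<forall>g\<in>H. PX - F \<subseteq> g" using insert.IH by blast
    have "g \<in> {PX - F | F. small F}" using insert.prems by simp
    then obtain Fg where Fg: "small Fg" "g = PX - Fg" by blast
    have "small (F \<union> Fg)" using small_Un[OF F(1) Fg(1)] .
    moreover have "\<forall>g'\<in>insert g H. PX - (F \<union> Fg) \<subseteq> g'" using F(2) Fg(2) by blast
    ultimately show ?case by (intro exI[of _ "F \<union> Fg"] conjI)
  qed
  define Bs where "Bs = S \<union> {PX - F | F. small F}"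
  have Sne: "S \<noteq> {}" using em by auto
  have fipB: "fip PX Bs" unfolding fip_def
  proof (intro allI impI)
    fix G assume G: "finite G \<and> G \<subseteq> Bs"
    have "finite (G - S)" "G - S \<subseteq> {PX - F | F. small F}" using G unfolding Bs_def by auto
    hence "\<exists>F. small F \<and> (\<forall>g\<in>G - S. PX - F \<subseteq> g)" by (rule gen)
    then obtain F where F: "small F" "\<forall>g\<in>G - S. PX - F \<subseteq> g" by blast
    have "\<exists>B0\<in>S. B0 \<subseteq> \<Inter>(G \<inter> S)"
    proof (cases "G \<inter> S = {}")
      case True thus ?thesis using Sne by auto
    next
      case False
      have "finite (G \<inter> S)" using G by blast
      thus ?thesis using shrinking_fin[OF sh _ _ False] by blast
    qed
    then obtain B0 where B0: "B0 \<in> S" "B0 \<subseteq> \<Inter>(G \<inter> S)" by blast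
    obtain A where A: "A \<in> S" "A \<subseteq> B0" "av (mu A) > e" using neg[OF B0(1)] by blast
    have ACR: "A \<in> CR" using A(1) SC by blast
    have "\<not> A \<subseteq> F"
    proof
      assume "A \<subseteq> F"
      hence "av (mu A) \<le> e" using F(1) ACR unfolding small_def by blast
      thus False using A(3) by simp
    qed
    then obtain x where x: "x \<in> A" "x \<notin> F" by blast
    have xP: "x \<in> PX" using CR_sub[OF ACR] x(1) by blast
    have "x \<in> \<Inter>G"
    proof
      fix g assume g: "g \<in> G"
      show "x \<in> g"
      proof (cases "g \<in> S")
        case True thus ?thesis using g B0(2) A(2) x(1) by blast
      next
        case False thus ?thesis using g F(2) xP x(2) by blast
      qed
    qed
    thus "PX \<inter> \<Inter>G \<noteq> {}" using xP by blast
  qed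
  obtain U where U: "ultra_on PX U" "Bs \<subseteq> U" using ultra_exists[OF fipB] by blast
  have SU: "S \<subseteq> U" using U(2) unfolding Bs_def by blast
  have dich: "E \<in> U \<or> PX - E \<in> U" if "E \<subseteq> PX" for E using U(1) that unfolding ultra_on_def by blast
  have nsmall: "F \<notin> U" if "small F" for F
  proof
    assume FU: "F \<in> U"
    have "PX - F \<in> U" using that U(2) unfolding Bs_def by blast
    from ultra_fip2[OF U(1) FU this] show False by blast
  qed
  have PU: "PX \<in> U" by (rule ultra_X[OF U(1)])
  have TPX: "T k D \<subseteq> PX" for k D unfolding T_def by blast
  define E where "E k = {D \<in> Rs k. T k D \<in> U}" for k
  have pt: "\<exists>y\<in>Xs k. \<forall>D\<in>E k. y \<in> D" if k: "k \<in> L" for k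
  proof (rule ccontr)
    assume npt: "\<not> (\<exists>y\<in>Xs k. \<forall>D\<in>E k. y \<in> D)"
    interpret K: pm av "Xs k" "Rs k" "mus k" by (rule pmj[OF k])
    have TX: "T k (Xs k) = PX" unfolding T_def using k by (auto simp: PiE_iff)
    have XE: "Xs k \<in> E k" unfolding E_def using K.XR TX PU by simp
    have ER: "E k \<subseteq> Rs k" unfolding E_def by blast
    have Eem: "\<Inter>(E k) = {}"
    proof (rule ccontr)
      assume "\<Inter>(E k) \<noteq> {}"
      then obtain z where z: "z \<in> \<Inter>(E k)" by blast
      hence "z \<in> Xs k" using XE by blast
      thus False using npt z by blast
    qed
    have TInt: "T k (D1 \<inter> D2) = T k D1 \<inter> T k D2" for D1 D2 unfolding T_def by blast
    have Esh: "shrinking (E k)" unfolding shrinking_def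
    proof (intro ballI)
      fix D1 D2 assume D: "D1 \<in> E k" "D2 \<in> E k"
      have T1: "T k D1 \<in> U" and T2: "T k D2 \<in> U" and R1: "D1 \<in> Rs k" and R2: "D2 \<in> Rs k"
        using D unfolding E_def by auto
      have "T k D1 \<inter> T k D2 \<in> U" by (rule ultra_Int[OF U(1) T1 T2 TPX])
      hence "T k (D1 \<inter> D2) \<in> U" by (simp add: TInt)
      moreover have "D1 \<inter> D2 \<in> Rs k" by (rule K.rInt[OF R1 R2])
      ultimately have "D1 \<inter> D2 \<in> E k" unfolding E_def by simp
      thus "\<exists>C\<in>E k. C \<subseteq> D1 \<inter> D2" by blast
    qed
    obtain D0 where D0: "D0 \<in> E k" "\<And>D'. D' \<in> E k \<Longrightarrow> D' \<subseteq> D0 \<Longrightarrow> av (mus k D') \<le> e"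
      using K.cont[OF ER Esh Eem e] by blast
    have D0R: "D0 \<in> Rs k" and D0U: "T k D0 \<in> U" using D0(1) unfolding E_def by auto
    have "\<not> small (T k D0)" using nsmall D0U by blast
    moreover have "T k D0 \<in> CR" using M_CR[OF T_M[OF k D0R]] .
    ultimately obtain W where W: "W \<in> CR" "W \<subseteq> T k D0" "av (mu W) > e"
      unfolding small_def by (auto simp: not_le)
    have "av (mu W) \<le> K.nrm D0" by (rule T_bound[OF k D0R W(1,2)])
    hence nD0: "K.nrm D0 > e" using W(3) by simp
    obtain D1 where D1: "D1 \<in> Rs k" "D1 \<subseteq> D0" "av (mus k D1) > e"
    proof (rule ccontr)
      assume "\<not> thesis"
      hence "\<And>C. C \<in> Rs k \<Longrightarrow> C \<subseteq> D0 \<Longrightarrow> av (mus k C) \<le> e" using that by (meson not_le)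
      hence "K.nrm D0 \<le> e" by (rule K.nrm_least[OF D0R])
      thus False using nD0 by simp
    qed
    show False
    proof (cases "T k D1 \<in> U")
      case True
      hence "D1 \<in> E k" using D1(1) unfolding E_def by blast
      thus False using D0(2)[of D1] D1 by simp
    next
      case False
      hence "PX - T k D1 \<in> U" using dich[OF TPX] by blast
      moreover have "PX - T k D1 = T k (Xs k - D1)" unfolding T_def using k by (auto simp: PiE_iff)
      ultimately have "T k (Xs k - D1) \<in> U" by simp
      hence "T k D0 \<inter> T k (Xs k - D1) \<in> U" by (rule ultra_Int[OF U(1) D0U _ TPX])
      moreover have "T k D0 \<inter> T k (Xs k - D1) = T k (D0 - D1)"
        unfolding T_def using K.subR[OF D0R] by blast
      ultimately have "D0 - D1 \<in> E k" using K.rDiff[OF D0R D1(1)] unfolding E_def by simp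
      hence 1: "av (mus k (D0 - D1)) \<le> e" using D0(2) by blast
      have 2: "av (mus k D0) \<le> e" using D0 by blast
      have "mus k D0 = mus k D1 + mus k (D0 - D1)" using K.mu_split[OF D0R D1(1)] D1(2) by (simp add: Int_absorb1)
      hence "mus k D1 = mus k D0 - mus k (D0 - D1)" by simp
      hence "av (mus k D1) \<le> e" using av_diff[of "mus k D0" "mus k (D0 - D1)"] 1 2 by simp
      thus False using D1(3) by simp
    qed
  qed
  define x where "x k = (if k \<in> L then (SOME y. y \<in> Xs k \<and> (\<forall>D\<in>E k. y \<in> D)) else undefined)" for k
  have xk: "x k \<in> Xs k \<and> (\<forall>D\<in>E k. x k \<in> D)" if "k \<in> L" for k
    unfolding x_def using that by simp (rule someI_ex, use pt[OF that] in blast)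
  have xP: "x \<in> PX" using xk unfolding x_def by (auto simp: PiE_iff extensional_def)
  have "x \<in> B" if B: "B \<in> S" for B
  proof -
    have BU: "B \<in> U" using B SU by blast
    have BCR: "B \<in> CR" using B SC by blast
    obtain Cs where Cs: "finite Cs" "Cs \<subseteq> M" "disjoint Cs" "B = \<Union>Cs" using CR_decomp[OF BCR] by blast
    have "\<exists>Z\<in>Cs. Z \<in> U"
    proof (rule ccontr)
      assume "\<not> (\<exists>Z\<in>Cs. Z \<in> U)"
      have "\<forall>Z\<in>Cs. PX - Z \<in> U"
      proof
        fix Z assume Z: "Z \<in> Cs"
        hence "Z \<subseteq> PX" using M_sub Cs(2) by blast
        hence "Z \<in> U \<or> PX - Z \<in> U" by (rule dich)
        thus "PX - Z \<in> U" using Z \<open>\<not> (\<exists>Z\<in>Cs. Z \<in> U)\<close> by blast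
      qed
      hence "insert B ((\<lambda>Z. PX - Z) ` Cs) \<subseteq> U" using BU by blast
      moreover have "finite (insert B ((\<lambda>Z. PX - Z) ` Cs))" using Cs(1) by simp
      moreover have "fip PX U" using U(1) unfolding ultra_on_def by (rule conjunct1)
      ultimately have "PX \<inter> \<Inter>(insert B ((\<lambda>Z. PX - Z) ` Cs)) \<noteq> {}"
        unfolding fip_def by blast
      moreover have "PX \<inter> \<Inter>(insert B ((\<lambda>Z. PX - Z) ` Cs)) = {}" using Cs(4) by blast
      ultimately show False by blast
    qed
    then obtain Z where Z: "Z \<in> Cs" "Z \<in> U" by blast
    have ZM: "Z \<in> M" using Z(1) Cs(2) by blast
    have "Z \<noteq> {}" using ultra_fip1[OF U(1) Z(2)] by blast
    then obtain J A where JA: "adm J A" "Z = cyl J A" using ZM by (elim M_cases) auto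
    have "x \<in> cyl J A" unfolding cyl_def
    proof (intro IntI xP InterI)
      fix Y assume "Y \<in> (\<lambda>j. {x. x j \<in> A j}) ` J"
      then obtain j where j: "j \<in> J" "Y = {x. x j \<in> A j}" by blast
      have jL: "j \<in> L" and Aj: "A j \<in> Rs j" using JA(1) j(1) by auto
      have "Z \<subseteq> T j (A j)" unfolding JA(2) cyl_def T_def using j(1) by blast
      hence "T j (A j) \<in> U" by (rule ultra_up[OF U(1) Z(2) _ TPX])
      hence "A j \<in> E j" unfolding E_def using Aj by blast
      hence "x j \<in> A j" using xk[OF jL] by blast
      thus "x \<in> Y" using j(2) by simp
    qed
    thus "x \<in> B" using JA(2) Z(1) Cs(4) by blast
  qed
  hence "x \<in> \<Inter>S" by blast
  thus False using em by blast
qed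

lemma prod_prob: "is_prob_measure av PX CR mu"
proof -
  have cov: "covering_ring PX CR" unfolding covering_ring_def ring_closed_def
  proof (intro conjI)
    show "CR \<subseteq> Pow PX" using CR_sub by blast
    show "\<forall>A\<in>CR. \<forall>B\<in>CR. A \<union> B \<in> CR \<and> A \<inter> B \<in> CR \<and> A - B \<in> CR" using CR_Un CR_Int CR_Diff by blast
    show "\<Union>CR = PX" using CR_sub PX_CR by blast
  qed
  have bd: "\<forall>A\<in>CR. bdd_above {av (mu B) | B. B \<in> CR \<and> B \<subseteq> A}"
  proof
    fix A assume "A \<in> CR"
    show "bdd_above {av (mu B) | B. B \<in> CR \<and> B \<subseteq> A}"
      by (rule bdd_aboveI[of _ 1]) (use CR_le1 in blast)
  qed
  have muX: "mu PX = 1" using mu_cyl[of "{}" "\<lambda>_. {}"] cyl_empty by simp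
  have snX: "set_norm av CR mu PX = 1" unfolding set_norm_def
  proof (rule cSup_eq_maximum)
    show "1 \<in> {av (mu B) | B. B \<in> CR \<and> B \<subseteq> PX}" using PX_CR muX by force
    fix y assume "y \<in> {av (mu B) | B. B \<in> CR \<and> B \<subseteq> PX}"
    thus "y \<le> 1" using CR_le1 by blast
  qed
  have ad: "\<forall>A\<in>CR. \<forall>B\<in>CR. A \<inter> B = {} \<longrightarrow> mu (A \<union> B) = mu A + mu B" using additive by blast
  have ct: "\<forall>S. S \<subseteq> CR \<and> shrinking S \<and> \<Inter>S = {} \<longrightarrow>
        (\<forall>e>0. \<exists>B\<in>S. \<forall>A\<in>S. A \<subseteq> B \<longrightarrow> av (mu A) \<le> e)" using prod_cont by blast
  show ?thesis
    unfolding is_prob_measure_def is_measure_def using cov ad bd ct PX_CR muX snX by blast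
qed

end

lemma nav_from_K:
  fixes av :: "'k::field \<Rightarrow> real"
  assumes "nonarch_field_over_Qp p av" shows "nav av"
proof -
  note h = assms[unfolded nonarch_field_over_Qp_def]
  note h1 = h[THEN conjunct2]
  note h2 = h1[THEN conjunct2]
  note h3 = h2[THEN conjunct2]
  note h4 = h3[THEN conjunct2]
  note h5 = h4[THEN conjunct2]
  note h6 = h5[THEN conjunct2]
  show ?thesis
  proof (rule nav.intro)
    show "\<And>x. 0 \<le> av x" by (rule h1[THEN conjunct1, rule_format])
    show "\<And>x. av x = 0 \<longleftrightarrow> x = 0" by (rule h2[THEN conjunct1, rule_format])
    show "\<And>x y. av (x * y) = av x * av y" by (rule h3[THEN conjunct1, rule_format])
    show "\<And>x y. av (x + y) \<le> max (av x) (av y)" by (rule h4[THEN conjunct1, rule_format])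
    show "\<And>s::nat \<Rightarrow> 'k. (\<forall>e>0. \<exists>N. \<forall>m\<ge>N. \<forall>n\<ge>N. av (s m - s n) < e) \<Longrightarrow>
        (\<exists>L. \<forall>e>0. \<exists>N. \<forall>n\<ge>N. av (s n - L) < e)" by (rule h6[THEN conjunct1, THEN spec, THEN mp])
  qed
qed

theorem theorem2p8:
  fixes p :: nat and av :: "'k::field \<Rightarrow> real"
    and L :: "'i set" and Xs :: "'i \<Rightarrow> 'a set" and Rs :: "'i \<Rightarrow> 'a set set"
    and mus :: "'i \<Rightarrow> 'a set \<Rightarrow> 'k" and mu :: "('i \<Rightarrow> 'a) set \<Rightarrow> 'k"
  assumes K: "nonarch_field_over_Qp p av"
    and prob: "\<And>j. j \<in> L \<Longrightarrow> is_prob_measure av (Xs j) (Rs j) (mus j)"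
    and complete: "\<And>j. j \<in> L \<Longrightarrow> Rs j = completion av (Xs j) (Rs j) (mus j)"
    and hausdorff: "\<And>j. j \<in> L \<Longrightarrow> Hausdorff_space (ring_topology (Rs j))"
    and additive: "\<And>A B. A \<in> cylinder_ring L Xs Rs \<Longrightarrow> B \<in> cylinder_ring L Xs Rs \<Longrightarrow>
                     A \<inter> B = {} \<Longrightarrow> mu (A \<union> B) = mu A + mu B"
    and cyl: "\<And>J A. finite J \<Longrightarrow> J \<subseteq> L \<Longrightarrow> (\<forall>j\<in>J. A j \<in> Rs j) \<Longrightarrow>
                mu (PiE L Xs \<inter> (\<Inter>j\<in>J. {x. x j \<in> A j})) = (\<Prod>j\<in>J. mus j (A j))"
  shows "\<exists>nu. is_prob_measure av (PiE L Xs)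
                 (completion av (PiE L Xs) (cylinder_ring L Xs Rs) mu) nu
             \<and> (\<forall>A\<in>cylinder_ring L Xs Rs. nu A = mu A)"
proof -
  have N: "nav av" by (rule nav_from_K[OF K])
  interpret P: prod_setting av L Xs Rs mus mu
    by (rule prod_setting.intro[OF N], rule prod_setting_axioms.intro) (fact prob additive cyl)+
  interpret Q: pm av "PiE L Xs" "cylinder_ring L Xs Rs" mu
    by (rule pm.intro[OF N], rule pm_axioms.intro, rule P.prod_prob)
  show ?thesis by (rule Q.extension)
qed


end
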